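(* Let $\mathcal C$ be a VTDAG over a binary signature $\Sigma$, let $m\in\mathbb N$, and let $\bar{\mathcal C}$ (over signature $\bar\Sigma$) be a natural coloring of $\mathcal C$ with respect to $m$. Then for every conjunctive query $\Phi(\bar x,y)$ over $\Sigma$ with $|\bar x|<m$ there exists $n\in\mathbb N$ such that for every element $e$ of $\mathcal C$: $M^{\bar\Sigma}_n(\bar{\mathcal C})\models\exists\bar x\,\Phi(\bar x,q_n(e))$ if and only if $\mathcal C\models\exists\bar x\,\Phi(\bar x,e)$.
   Context: Binary signature: relations of arity at most 2 plus constants; equality atoms $x=c$ allowed in queries. $\mathcal C_{con}$: elements interpreting constants; $\mathcal C_{non}$: the rest. $\mathcal P(e)=\{e\}$ for $e\in\mathcal C_{con}$, and $\mathcal P(e)=\{e\}\cup\{x\in\mathcal C_{non}:\mathcal C\models R(x,e)$ for some binary $R\}$ for $e\in\mathcal C_{non}$. VTDAG: the directed graph on $\mathcal C_{non}$ given by binary atoms is acyclic; for each binary $R$ and $e\in\mathcal C_{non}$ at most one $d\in\mathcal C_{non}$ has $R(d,e)$; for each $e\in\mathcal C_{non}$, any $d,d'\in\mathcal P(e)$ satisfy $d\in\mathcal P(d')$ or $d'\in\mathcal P(d)$. Colors are unary predicates $K^l_h$ (hue $h$, lightness $l$). A coloring of $\mathcal C$ is a structure $\bar{\mathcal C}$ over a finite $\bar\Sigma$ with $\Sigma\subseteq\bar\Sigma\subseteq\Sigma\cup\{K^l_h\}$, restricting to $\mathcal C$ on $\Sigma$, in which each element has exactly one color. $\mathcal P_0(e)=\mathcal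 P(e)$, $\mathcal P_k(e)=\bigcup_{a\in\mathcal P_{k-1}(e)}\mathcal P(a)$. A coloring is natural (w.r.t. $m$) if: whenever $e'\in\mathcal P_m(e)$, $e'\ne e$, $K^l_h(e)$ and $K^{l'}_{h'}(e')$, then $h\ne h'$; and whenever $K^l_h(e)$ and $K^l_{h'}(e')$ (same lightness), the substructures of $\mathcal C$ on $\mathcal P(e)\cup\mathcal C_{con}$ and on $\mathcal P(e')\cup\mathcal C_{con}$ are isomorphic. Positive types $ptp_n(\bar{\mathcal C},e,\bar\Sigma)$: conjunctive queries $\Psi(\bar x,y)$, $|\bar x|<n$, over $\bar\Sigma$, with $\bar{\mathcal C}\models\exists\bar x\Psi(\bar x,e)$; $\equiv_n$ is equality of these types; $M^{\bar\Sigma}_n(\bar{\mathcal C})$ is the quotient by $\equiv_n$ (a tuple of classes is in $R$ iff some representatives are), and $q_n$ the quotient map. *)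

theory Defs
  imports Main
begin

text \<open>A signature is given by a set U of unary relation symbols, a set B of binary
relation symbols and a set Cs of constant symbols.\<close>

record ('e,'u,'b,'c) struc =
  dom  :: "'e set"
  urel :: "'u \<Rightarrow> 'e \<Rightarrow> bool"
  brel :: "'b \<Rightarrow> 'e \<Rightarrow> 'e \<Rightarrow> bool"
  cval :: "'c \<Rightarrow> 'e"

definition struc_wf :: "'u set \<Rightarrow> 'b set \<Rightarrow> 'c set \<Rightarrow> ('e,'u,'b,'c) struc \<Rightarrow> bool" where
  "struc_wf U B Cs A \<longleftrightarrow>
     (\<forall>c\<in>Cs. cval A c \<in> dom A) \<and>
     (\<forall>u\<in>U. \<forall>x. urel A u x \<longrightarrow> x \<in> dom A) \<and>
     (\<forall>R\<in>B. \<forall>x y. brel A R x y \<longrightarrow> x \<in> dom A \<and> y \<in> dom A)"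

text \<open>Variables are natural numbers; variable 0 is the distinguished free variable y,
variables 1..k are the existentially quantified variables x-bar (so |x-bar| = k).\<close>

datatype ('u,'b,'c) atom = UAt 'u nat | BAt 'b nat nat | EqC nat 'c

type_synonym ('u,'b,'c) cq = "nat \<times> ('u,'b,'c) atom list"

fun atom_vars :: "('u,'b,'c) atom \<Rightarrow> nat set" where
  "atom_vars (UAt u x) = {x}"
| "atom_vars (BAt R x y) = {x, y}"
| "atom_vars (EqC x c) = {x}"

fun atom_over :: "'u set \<Rightarrow> 'b set \<Rightarrow> 'c set \<Rightarrow> ('u,'b,'c) atom \<Rightarrow> bool" where
  "atom_over U B Cs (UAt u x) = (u \<in> U)"
| "atom_over U B Cs (BAt R x y) = (R \<in> B)"
| "atom_over U B Cs (EqC x c) = (c \<in> Cs)"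

definition cq_over :: "'u set \<Rightarrow> 'b set \<Rightarrow> 'c set \<Rightarrow> ('u,'b,'c) cq \<Rightarrow> bool" where
  "cq_over U B Cs Q \<longleftrightarrow>
     (\<forall>a\<in>set (snd Q). atom_over U B Cs a \<and> atom_vars a \<subseteq> {0..fst Q})"

fun atom_holds :: "('e,'u,'b,'c) struc \<Rightarrow> (nat \<Rightarrow> 'e) \<Rightarrow> ('u,'b,'c) atom \<Rightarrow> bool" where
  "atom_holds A v (UAt u x) = urel A u (v x)"
| "atom_holds A v (BAt R x y) = brel A R (v x) (v y)"
| "atom_holds A v (EqC x c) = (v x = cval A c)"

definition holds :: "('e,'u,'b,'c) struc \<Rightarrow> ('u,'b,'c) cq \<Rightarrow> 'e \<Rightarrow> bool" where
  "holds A Q e \<longleftrightarrow>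
     (\<exists>v. v 0 = e \<and> (\<forall>i\<in>{1..fst Q}. v i \<in> dom A) \<and> (\<forall>a\<in>set (snd Q). atom_holds A v a))"

definition Ccon :: "'c set \<Rightarrow> ('e,'u,'b,'c) struc \<Rightarrow> 'e set" where
  "Ccon Cs A = cval A ` Cs"

definition Cnon :: "'c set \<Rightarrow> ('e,'u,'b,'c) struc \<Rightarrow> 'e set" where
  "Cnon Cs A = dom A - Ccon Cs A"

definition Pset :: "'b set \<Rightarrow> 'c set \<Rightarrow> ('e,'u,'b,'c) struc \<Rightarrow> 'e \<Rightarrow> 'e set" where
  "Pset B Cs A e =
     (if e \<in> Ccon Cs A then {e}
      else {e} \<union> {x \<in> Cnon Cs A. \<exists>R\<in>B. brel A R x e})"

fun Pk :: "'b set \<Rightarrow> 'c set \<Rightarrow> ('e,'u,'b,'c) struc \<Rightarrow> nat \<Rightarrow> 'e \<Rightarrow> 'e set" where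
  "Pk B Cs A 0 e = Pset B Cs A e"
| "Pk B Cs A (Suc k) e = (\<Union>a\<in>Pk B Cs A k e. Pset B Cs A a)"

definition vtdag :: "'u set \<Rightarrow> 'b set \<Rightarrow> 'c set \<Rightarrow> ('e,'u,'b,'c) struc \<Rightarrow> bool" where
  "vtdag U B Cs A \<longleftrightarrow>
     struc_wf U B Cs A \<and>
     acyclic {(d, e). d \<in> Cnon Cs A \<and> e \<in> Cnon Cs A \<and> (\<exists>R\<in>B. brel A R d e)} \<and>
     (\<forall>R\<in>B. \<forall>e\<in>Cnon Cs A. \<forall>d\<in>Cnon Cs A. \<forall>d'\<in>Cnon Cs A.
         brel A R d e \<and> brel A R d' e \<longrightarrow> d = d') \<and>
     (\<forall>e\<in>Cnon Cs A. \<forall>d\<in>Pset B Cs A e. \<forall>d'\<in>Pset B Cs A e.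
         d \<in> Pset B Cs A d' \<or> d' \<in> Pset B Cs A d)"

definition iso_substr :: "'u set \<Rightarrow> 'b set \<Rightarrow> 'c set \<Rightarrow> ('e,'u,'b,'c) struc \<Rightarrow> 'e set \<Rightarrow> 'e set \<Rightarrow> bool" where
  "iso_substr U B Cs A S T \<longleftrightarrow>
     (\<exists>f. bij_betw f S T \<and>
          (\<forall>u\<in>U. \<forall>x\<in>S. urel A u x \<longleftrightarrow> urel A u (f x)) \<and>
          (\<forall>R\<in>B. \<forall>x\<in>S. \<forall>y\<in>S. brel A R x y \<longleftrightarrow> brel A R (f x) (f y)) \<and>
          (\<forall>c\<in>Cs. f (cval A c) = cval A c))"

text \<open>Colored unary symbols: Inl u for u in Sigma, Inr (h, l) for the
color K^l_h (hue h, lightness l). K is the (finite) set of colors in Sigma-bar.\<close>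

definition coloring ::
  "'u set \<Rightarrow> 'b set \<Rightarrow> 'c set \<Rightarrow> ('e,'u,'b,'c) struc \<Rightarrow> (nat \<times> nat) set
     \<Rightarrow> ('e,'u + nat \<times> nat,'b,'c) struc \<Rightarrow> bool" where
  "coloring U B Cs A K Ab \<longleftrightarrow>
     finite U \<and> finite B \<and> finite Cs \<and> finite K \<and>
     dom Ab = dom A \<and>
     (\<forall>u\<in>U. \<forall>x. urel Ab (Inl u) x = urel A u x) \<and>
     (\<forall>R\<in>B. \<forall>x y. brel Ab R x y = brel A R x y) \<and>
     (\<forall>c\<in>Cs. cval Ab c = cval A c) \<and>
     (\<forall>hl\<in>K. \<forall>x. urel Ab (Inr hl) x \<longrightarrow> x \<in> dom A) \<and>
     (\<forall>e\<in>dom A. \<exists>!hl. hl \<in> K \<and> urel Ab (Inr hl) e)"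

definition natural_coloring ::
  "'u set \<Rightarrow> 'b set \<Rightarrow> 'c set \<Rightarrow> ('e,'u,'b,'c) struc \<Rightarrow> (nat \<times> nat) set
     \<Rightarrow> ('e,'u + nat \<times> nat,'b,'c) struc \<Rightarrow> nat \<Rightarrow> bool" where
  "natural_coloring U B Cs A K Ab m \<longleftrightarrow>
     coloring U B Cs A K Ab \<and>
     (\<forall>e\<in>dom A. \<forall>e'\<in>dom A. \<forall>h l h' l'.
        e' \<in> Pk B Cs A m e \<and> e' \<noteq> e \<and> (h, l) \<in> K \<and> (h', l') \<in> K \<and>
        urel Ab (Inr (h, l)) e \<and> urel Ab (Inr (h', l')) e' \<longrightarrow> h \<noteq> h') \<and>
     (\<forall>e\<in>dom A. \<forall>e'\<in>dom A. \<forall>h h' l.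
        (h, l) \<in> K \<and> (h', l) \<in> K \<and>
        urel Ab (Inr (h, l)) e \<and> urel Ab (Inr (h', l)) e' \<longrightarrow>
        iso_substr U B Cs A (Pset B Cs A e \<union> Ccon Cs A) (Pset B Cs A e' \<union> Ccon Cs A))"

text \<open>Sigma-bar has unary symbols Inl ` U \<union> Inr ` K, binary symbols B, constants Cs.\<close>

definition ptp :: "'u set \<Rightarrow> 'b set \<Rightarrow> 'c set \<Rightarrow> (nat \<times> nat) set \<Rightarrow> nat
    \<Rightarrow> ('e,'u + nat \<times> nat,'b,'c) struc \<Rightarrow> 'e \<Rightarrow> ('u + nat \<times> nat,'b,'c) cq set" where
  "ptp U B Cs K n Ab e =
     {Q. cq_over (Inl ` U \<union> Inr ` K) B Cs Q \<and> fst Q < n \<and> holds Ab Q e}"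

definition qn :: "'u set \<Rightarrow> 'b set \<Rightarrow> 'c set \<Rightarrow> (nat \<times> nat) set \<Rightarrow> nat
    \<Rightarrow> ('e,'u + nat \<times> nat,'b,'c) struc \<Rightarrow> 'e \<Rightarrow> 'e set" where
  "qn U B Cs K n Ab e = {e' \<in> dom Ab. ptp U B Cs K n Ab e' = ptp U B Cs K n Ab e}"

definition quot :: "'u set \<Rightarrow> 'b set \<Rightarrow> 'c set \<Rightarrow> (nat \<times> nat) set \<Rightarrow> nat
    \<Rightarrow> ('e,'u + nat \<times> nat,'b,'c) struc \<Rightarrow> ('e set,'u + nat \<times> nat,'b,'c) struc" where
  "quot U B Cs K n Ab =
     \<lparr> dom = qn U B Cs K n Ab ` dom Ab,
       urel = (\<lambda>u X. \<exists>x\<in>X. urel Ab u x),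
       brel = (\<lambda>R X Y. \<exists>x\<in>X. \<exists>y\<in>Y. brel Ab R x y),
       cval = (\<lambda>c. qn U B Cs K n Ab (cval Ab c)) \<rparr>"

definition lift_cq :: "('u,'b,'c) cq \<Rightarrow> ('u + nat \<times> nat,'b,'c) cq" where
  "lift_cq Q = (fst Q, map (map_atom Inl id id) (snd Q))"

end

theory Submission
  imports Defs
begin

locale LL =
  fixes U :: "'u set" and B :: "'b set" and Cs :: "'c set"
    and C :: "('e,'u,'b,'c) struc"
    and K :: "(nat \<times> nat) set" and Cb :: "('e,'u + nat \<times> nat,'b,'c) struc"
    and m :: nat
  assumes vt: "vtdag U B Cs C"
    and ncol: "natural_coloring U B Cs C K Cb m"
begin

definition UB :: "('u + nat \<times> nat) set" where "UB = Inl ` U \<union> Inr ` K"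
abbreviation CC where "CC \<equiv> Ccon Cs C"
abbreviation CN where "CN \<equiv> Cnon Cs C"
abbreviation ptpJ where "ptpJ J x \<equiv> ptp U B Cs K J Cb x"
definition eqv :: "nat \<Rightarrow> 'e \<Rightarrow> 'e \<Rightarrow> bool" where
  "eqv J x y \<longleftrightarrow> x \<in> dom C \<and> y \<in> dom C \<and> ptpJ J x = ptpJ J y"
definition lee :: "nat \<Rightarrow> 'e \<Rightarrow> 'e \<Rightarrow> bool" where
  "lee J x y \<longleftrightarrow> x \<in> dom C \<and> y \<in> dom C \<and> ptpJ J x \<subseteq> ptpJ J y"
definition col :: "'e \<Rightarrow> nat \<times> nat" where
  "col x = (THE k. k \<in> K \<and> urel Cb (Inr k) x)"

lemma colr: "coloring U B Cs C K Cb" using ncol unfolding natural_coloring_def by blast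
lemma finU: "finite U" and finB: "finite B" and finCs: "finite Cs" and finK: "finite K"
  using colr unfolding coloring_def by auto
lemma domCb[simp]: "dom Cb = dom C" using colr unfolding coloring_def by auto
lemma urelCb: "u \<in> U \<Longrightarrow> urel Cb (Inl u) x = urel C u x" using colr unfolding coloring_def by auto
lemma brelCb: "R \<in> B \<Longrightarrow> brel Cb R x y = brel C R x y" using colr unfolding coloring_def by auto
lemma cvalCb: "c \<in> Cs \<Longrightarrow> cval Cb c = cval C c" using colr unfolding coloring_def by auto
lemma colK: "hl \<in> K \<Longrightarrow> urel Cb (Inr hl) x \<Longrightarrow> x \<in> dom C" using colr unfolding coloring_def by auto
lemma col_ex1: "x \<in> dom C \<Longrightarrow> \<exists>!hl. hl \<in> K \<and> urel Cb (Inr hl) x" using colr unfolding coloring_def by auto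
lemma col: "x \<in> dom C \<Longrightarrow> col x \<in> K \<and> urel Cb (Inr (col x)) x"
  unfolding col_def by (rule theI') (rule col_ex1)
lemma col_uniq: "x \<in> dom C \<Longrightarrow> k \<in> K \<Longrightarrow> urel Cb (Inr k) x \<Longrightarrow> k = col x"
  using col col_ex1 by blast
lemma wf: "struc_wf U B Cs C" using vt unfolding vtdag_def by blast
lemma cval_dom: "c \<in> Cs \<Longrightarrow> cval C c \<in> dom C" using wf unfolding struc_wf_def by blast
lemma brel_dom: "R \<in> B \<Longrightarrow> brel C R x y \<Longrightarrow> x \<in> dom C \<and> y \<in> dom C"
  using wf unfolding struc_wf_def by blast
lemma CC_dom: "CC \<subseteq> dom C" using cval_dom unfolding Ccon_def by auto
lemma CN_dom: "CN \<subseteq> dom C" unfolding Cnon_def by auto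
lemma finCC: "finite CC" using finCs unfolding Ccon_def by auto
lemma finUB: "finite UB" unfolding UB_def using finU finK by auto

lemma ptp_mono: "J' \<le> J \<Longrightarrow> ptpJ J' x = ptpJ J x \<inter> {Q. fst Q < J'}"
  unfolding ptp_def by auto

lemma eqv_mono: "eqv J x y \<Longrightarrow> J' \<le> J \<Longrightarrow> eqv J' x y"
  unfolding eqv_def using ptp_mono by metis
lemma lee_mono: "lee J x y \<Longrightarrow> J' \<le> J \<Longrightarrow> lee J' x y"
  unfolding lee_def using ptp_mono by (metis Int_mono order_refl)
lemma eqv_sym: "eqv J x y \<Longrightarrow> eqv J y x" unfolding eqv_def by auto
lemma eqv_trans: "eqv J x y \<Longrightarrow> eqv J y z \<Longrightarrow> eqv J x z" unfolding eqv_def by auto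
lemma eqv_refl: "x \<in> dom C \<Longrightarrow> eqv J x x" unfolding eqv_def by auto
lemma lee_refl: "x \<in> dom C \<Longrightarrow> lee J x x" unfolding lee_def by auto
lemma lee_trans: "lee J x y \<Longrightarrow> lee J y z \<Longrightarrow> lee J x z" unfolding lee_def by auto
lemma eqv_lee: "eqv J x y \<Longrightarrow> lee J x y" unfolding eqv_def lee_def by auto
lemma eqv_dom: "eqv J x y \<Longrightarrow> x \<in> dom C \<and> y \<in> dom C" unfolding eqv_def by auto
lemma lee_dom: "lee J x y \<Longrightarrow> x \<in> dom C \<and> y \<in> dom C" unfolding lee_def by auto

lemma lee_holds: "lee J x y \<Longrightarrow> cq_over UB B Cs Q \<Longrightarrow> fst Q < J \<Longrightarrow> holds Cb Q x \<Longrightarrow> holds Cb Q y"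
  unfolding lee_def ptp_def UB_def by auto

lemma lee_urel: assumes "lee J x y" "1 \<le> J" "u \<in> UB" "urel Cb u x" shows "urel Cb u y"
proof -
  have "holds Cb (0, [UAt u 0]) x" using assms lee_dom unfolding holds_def by auto
  then have "holds Cb (0, [UAt u 0]) y" using lee_holds[OF assms(1), of "(0, [UAt u 0])"] assms
    unfolding cq_over_def by auto
  then show ?thesis unfolding holds_def by auto
qed

lemma eqv_col: assumes "eqv J x y" "1 \<le> J" shows "col x = col y"
proof -
  have x: "x \<in> dom C" and y: "y \<in> dom C" using assms eqv_dom by auto
  have "urel Cb (Inr (col x)) y" using lee_urel[OF eqv_lee[OF assms(1)] assms(2), of "Inr (col x)"] col[OF x]
    unfolding UB_def by auto
  then show ?thesis using col_uniq[OF y] col[OF x] by auto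
qed

lemma lee_const: assumes "lee J x y" "1 \<le> J" "c \<in> Cs" "x = cval C c" shows "y = x"
proof -
  have "holds Cb (0, [EqC 0 c]) x" using assms lee_dom cvalCb unfolding holds_def by auto
  then have "holds Cb (0, [EqC 0 c]) y" using lee_holds[OF assms(1), of "(0, [EqC 0 c])"] assms
    unfolding cq_over_def by auto
  then show ?thesis unfolding holds_def using assms cvalCb by auto
qed

lemma eqv_CC: assumes "eqv J b x" "1 \<le> J" "x \<in> CC" shows "b = x"
proof -
  obtain c where "c \<in> Cs" "x = cval C c" using assms(3) unfolding Ccon_def by auto
  then show ?thesis using lee_const[OF eqv_lee[OF eqv_sym[OF assms(1)]] assms(2)] by auto
qed

lemma eqv_CN: assumes "eqv J b x" "1 \<le> J" "x \<in> CN" shows "b \<in> CN"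
proof -
  have "b \<in> dom C" using assms eqv_dom by auto
  moreover have "b \<notin> CC" using eqv_CC[OF eqv_sym[OF assms(1)] assms(2)] assms(3) unfolding Cnon_def by auto
  ultimately show ?thesis unfolding Cnon_def by auto
qed

lemma lee_brel_const1: assumes "lee J x y" "2 \<le> J" "R \<in> B" "c \<in> Cs" "brel C R x (cval C c)"
  shows "brel C R y (cval C c)"
proof -
  let ?Q = "(1::nat, [BAt R 0 1, EqC 1 c])"
  have "holds Cb ?Q x" unfolding holds_def
    using assms lee_dom cvalCb brelCb cval_dom by (intro exI[of _ "\<lambda>i. if i = 0 then x else cval C c"]) auto
  then have "holds Cb ?Q y" using lee_holds[OF assms(1), of ?Q] assms
    unfolding cq_over_def by auto
  then show ?thesis unfolding holds_def using assms cvalCb brelCb by auto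
qed

lemma lee_brel_const2: assumes "lee J x y" "2 \<le> J" "R \<in> B" "c \<in> Cs" "brel C R (cval C c) x"
  shows "brel C R (cval C c) y"
proof -
  let ?Q = "(1::nat, [BAt R 1 0, EqC 1 c])"
  have "holds Cb ?Q x" unfolding holds_def
    using assms lee_dom cvalCb brelCb cval_dom by (intro exI[of _ "\<lambda>i. if i = 0 then x else cval C c"]) auto
  then have "holds Cb ?Q y" using lee_holds[OF assms(1), of ?Q] assms
    unfolding cq_over_def by auto
  then show ?thesis unfolding holds_def using assms cvalCb brelCb by auto
qed

end

fun ren :: "(nat \<Rightarrow> nat) \<Rightarrow> ('u,'b,'c) atom \<Rightarrow> ('u,'b,'c) atom" where
  "ren f (UAt u x) = UAt u (f x)"
| "ren f (BAt R x y) = BAt R (f x) (f y)"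
| "ren f (EqC x c) = EqC (f x) c"

lemma ren_holds: "atom_holds A v (ren f a) = atom_holds A (v \<circ> f) a"
  by (cases a) auto
lemma ren_over: "atom_over U B Cs (ren f a) = atom_over U B Cs a"
  by (cases a) auto
lemma ren_vars: "atom_vars (ren f a) = f ` atom_vars a"
  by (cases a) auto
lemma ren_comp: "ren f (ren g a) = ren (f \<circ> g) a"
  by (cases a) auto
lemma ren_cong: "(\<And>t. t \<in> atom_vars a \<Longrightarrow> f t = g t) \<Longrightarrow> ren f a = ren g a"
  by (cases a) auto
lemma holds_cong: "(\<And>t. t \<in> atom_vars a \<Longrightarrow> v t = v' t) \<Longrightarrow> atom_holds A v a = atom_holds A v' a"
  by (cases a) auto

context LL
begin

lemma NCC: assumes "x \<in> CN" "y \<in> CC" shows "col x \<noteq> col y"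
proof
  assume eq: "col x = col y"
  have x: "x \<in> dom C" and y: "y \<in> dom C" using assms CN_dom CC_dom by auto
  obtain h l where hl: "col x = (h, l)" by fastforce
  have "iso_substr U B Cs C (Pset B Cs C x \<union> CC) (Pset B Cs C y \<union> CC)"
    using ncol col[OF x] col[OF y] eq x y hl unfolding natural_coloring_def by metis
  moreover have "Pset B Cs C y \<union> CC = CC" using assms(2) unfolding Pset_def by auto
  ultimately obtain f where f: "bij_betw f (Pset B Cs C x \<union> CC) CC" unfolding iso_substr_def by auto
  have fin: "finite (Pset B Cs C x \<union> CC)" using bij_betw_finite[OF f] finCC by auto
  have "x \<in> Pset B Cs C x" unfolding Pset_def by auto
  moreover have "x \<notin> CC" using assms(1) unfolding Cnon_def by auto
  ultimately have "CC \<subset> Pset B Cs C x \<union> CC" by auto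
  then have "card CC < card (Pset B Cs C x \<union> CC)" using fin by (metis psubset_card_mono)
  then show False using bij_betw_same_card[OF f] by auto
qed

lemma Pset_self: "e \<in> Pset B Cs C e" unfolding Pset_def by auto
lemma Pset_CN: "e \<in> CN \<Longrightarrow> Pset B Cs C e = {e} \<union> {x \<in> CN. \<exists>R\<in>B. brel C R x e}"
  unfolding Pset_def Cnon_def by auto
lemma Pset_dom: "e \<in> dom C \<Longrightarrow> Pset B Cs C e \<subseteq> dom C"
  unfolding Pset_def Cnon_def by auto
lemma Pk_dom: "e \<in> dom C \<Longrightarrow> Pk B Cs C k e \<subseteq> dom C"
  by (induction k) (auto dest: Pset_dom)
lemma Pk_Suc: "Pk B Cs C k e \<subseteq> Pk B Cs C (Suc k) e"
  using Pset_self by auto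
lemma Pk_mono: "k \<le> k' \<Longrightarrow> Pk B Cs C k e \<subseteq> Pk B Cs C k' e"
proof (induction k' )
  case 0 then show ?case by auto
next
  case (Suc k') then show ?case using Pk_Suc[of k' e] by (cases "k = Suc k'") auto
qed
lemma Pset_Pk: "Pset B Cs C e \<subseteq> Pk B Cs C k e"
  using Pk_mono[of 0 k e] by auto

lemma hue: assumes "x \<in> dom C" "y \<in> Pk B Cs C k x" "k \<le> m" "y \<noteq> x" "col y = col x" shows False
proof -
  have x: "x \<in> dom C" using assms(1) .
  have y: "y \<in> dom C" using Pk_dom assms by auto
  have ym: "y \<in> Pk B Cs C m x" using Pk_mono assms by auto
  obtain h l where hl: "col x = (h,l)" by fastforce
  show False using ncol col[OF x] col[OF y] hl ym assms(4,5) x y unfolding natural_coloring_def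
    by (metis assms(1))
qed

definition rel where "rel = {(d, e). d \<in> CN \<and> e \<in> CN \<and> (\<exists>R\<in>B. brel C R d e)}"
lemma acyc: "acyclic rel" using vt unfolding vtdag_def rel_def by blast
lemma par_uniq: "R \<in> B \<Longrightarrow> e \<in> CN \<Longrightarrow> d \<in> CN \<Longrightarrow> d' \<in> CN \<Longrightarrow> brel C R d e \<Longrightarrow> brel C R d' e \<Longrightarrow> d = d'"
  using vt unfolding vtdag_def by blast
lemma compar: "e \<in> CN \<Longrightarrow> d \<in> Pset B Cs C e \<Longrightarrow> d' \<in> Pset B Cs C e \<Longrightarrow>
   d \<in> Pset B Cs C d' \<or> d' \<in> Pset B Cs C d"
  using vt unfolding vtdag_def by blast

lemma hue_par: assumes "z \<in> CN" "p \<in> Pset B Cs C z" "p' \<in> Pset B Cs C z" "col p = col p'" shows "p = p'"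
proof (rule ccontr)
  assume ne: "p \<noteq> p'"
  have z: "z \<in> dom C" using assms CN_dom by auto
  have p: "p \<in> dom C" "p' \<in> dom C" using Pset_dom[OF z] assms by auto
  from compar[OF assms(1-3)] show False
  proof
    assume "p \<in> Pset B Cs C p'"
    then show False using hue[OF p(2), of p 0] ne assms(4) by auto
  next
    assume "p' \<in> Pset B Cs C p"
    then show False using hue[OF p(1), of p' 0] ne assms(4) by auto
  qed
qed

lemma Pset_rel: "e \<in> CN \<Longrightarrow> d \<in> Pset B Cs C e \<Longrightarrow> d \<noteq> e \<Longrightarrow> (d, e) \<in> rel"
  unfolding Pset_def rel_def Cnon_def by auto

definition shq :: "('u + nat \<times> nat, 'b, 'c) cq \<Rightarrow> nat \<times> nat \<Rightarrow> 'b \<Rightarrow> ('u + nat \<times> nat, 'b, 'c) cq" where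
  "shq Q k R = (Suc (fst Q), BAt R 1 0 # UAt (Inr k) 1 # map (ren Suc) (snd Q))"

lemma shq_over: "cq_over UB B Cs Q \<Longrightarrow> k \<in> K \<Longrightarrow> R \<in> B \<Longrightarrow> cq_over UB B Cs (shq Q k R)"
  unfolding cq_over_def shq_def UB_def by (auto simp: ren_over ren_vars subset_iff)

lemma shq_holds: assumes "y \<in> dom C"
  shows "holds Cb (shq Q k R) y \<longleftrightarrow> (\<exists>p. p \<in> dom C \<and> brel Cb R p y \<and> urel Cb (Inr k) p \<and> holds Cb Q p)"
proof
  assume "holds Cb (shq Q k R) y"
  then obtain v where v: "v 0 = y" "\<forall>i\<in>{1..Suc (fst Q)}. v i \<in> dom C"
    "\<forall>a\<in>set (snd (shq Q k R)). atom_holds Cb v a" unfolding holds_def shq_def by auto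
  have "holds Cb Q (v 1)" unfolding holds_def
    using v by (intro exI[of _ "v \<circ> Suc"]) (auto simp: shq_def ren_holds)
  then show "\<exists>p. p \<in> dom C \<and> brel Cb R p y \<and> urel Cb (Inr k) p \<and> holds Cb Q p"
    using v by (intro exI[of _ "v 1"]) (auto simp: shq_def)
next
  assume "\<exists>p. p \<in> dom C \<and> brel Cb R p y \<and> urel Cb (Inr k) p \<and> holds Cb Q p"
  then obtain p v where p: "p \<in> dom C" "brel Cb R p y" "urel Cb (Inr k) p" and v: "v 0 = p"
    "\<forall>i\<in>{1..fst Q}. v i \<in> dom C" "\<forall>a\<in>set (snd Q). atom_holds Cb v a" unfolding holds_def by auto
  let ?v = "\<lambda>t. if t = 0 then y else v (t - 1)"
  have "?v \<circ> Suc = v" by auto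
  moreover have "\<And>t. t \<le> fst Q \<Longrightarrow> v t \<in> dom C" using v p by (case_tac "t = 0") auto
  ultimately show "holds Cb (shq Q k R) y" unfolding holds_def shq_def
    using p v assms by (intro exI[of _ ?v]) (auto simp: ren_holds)
qed

lemma shq_holds_par: assumes "y \<in> CN" "d \<in> CN" "R \<in> B" "brel C R d y"
  shows "holds Cb (shq Q (col d) R) y \<longleftrightarrow> holds Cb Q d"
proof -
  have y: "y \<in> dom C" and d: "d \<in> dom C" using assms CN_dom by auto
  show ?thesis
  proof
    assume "holds Cb (shq Q (col d) R) y"
    then obtain p where p: "p \<in> dom C" "brel Cb R p y" "urel Cb (Inr (col d)) p" "holds Cb Q p"
      using shq_holds[OF y] by auto
    have "col p = col d" using col_uniq[OF p(1) _ p(3)] col[OF d] by auto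
    then have "p \<notin> CC" using NCC[OF assms(2)] by metis
    then have "p \<in> CN" using p unfolding Cnon_def by auto
    then have "p = d" using par_uniq[OF assms(3,1) _ assms(2)] p(2) assms(4) brelCb[OF assms(3)] by auto
    then show "holds Cb Q d" using p by auto
  next
    assume "holds Cb Q d"
    then show "holds Cb (shq Q (col d) R) y" using shq_holds[OF y] d col[OF d] assms brelCb by auto
  qed
qed

lemma PT: assumes "eqv J b c" "Suc i \<le> J" "1 \<le> i" "R \<in> B" "brel C R a b" "a \<in> CN" "b \<in> CN"
  shows "\<exists>p\<in>CN. brel C R p c \<and> eqv i p a"
proof -
  have c: "c \<in> CN" using eqv_CN[OF eqv_sym[OF assms(1)] _ assms(7)] assms by auto
  have a: "a \<in> dom C" using assms CN_dom by auto
  have k: "col a \<in> K" using col[OF a] by auto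
  let ?Q0 = "(0::nat, [] :: ('u + nat \<times> nat, 'b, 'c) atom list)"
  have q0o: "cq_over UB B Cs ?Q0" unfolding cq_over_def by auto
  have "holds Cb ?Q0 a" unfolding holds_def by auto
  then have "holds Cb (shq ?Q0 (col a) R) b" using shq_holds_par[OF assms(7,6,4,5)] by auto
  then have "shq ?Q0 (col a) R \<in> ptpJ J b" unfolding ptp_def using shq_over[OF q0o k assms(4)] assms(2,3)
    by (auto simp: shq_def UB_def)
  then have "holds Cb (shq ?Q0 (col a) R) c" using assms(1) unfolding eqv_def ptp_def by auto
  then obtain p where p: "p \<in> dom C" "brel Cb R p c" "urel Cb (Inr (col a)) p"
    using shq_holds c CN_dom by blast
  have cp: "col p = col a" using col_uniq[OF p(1) k p(3)] by auto
  then have "p \<notin> CC" using NCC[OF assms(6)] by metis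
  then have pCN: "p \<in> CN" using p unfolding Cnon_def by auto
  have br: "brel C R p c" using p brelCb assms by auto
  have "ptpJ i p = ptpJ i a"
  proof (rule set_eqI)
    fix Q
    show "Q \<in> ptpJ i p \<longleftrightarrow> Q \<in> ptpJ i a"
    proof (cases "cq_over UB B Cs Q \<and> fst Q < i")
      case True
      then have o: "cq_over UB B Cs (shq Q (col a) R)" "fst (shq Q (col a) R) < J"
        using shq_over k assms by (auto simp: shq_def)
      have "holds Cb Q p \<longleftrightarrow> holds Cb (shq Q (col a) R) c" using shq_holds_par[OF c pCN assms(4) br] cp by auto
      also have "\<dots> \<longleftrightarrow> holds Cb (shq Q (col a) R) b" using assms(1) o unfolding eqv_def ptp_def UB_def by blast
      also have "\<dots> \<longleftrightarrow> holds Cb Q a" using shq_holds_par[OF assms(7,6,4,5)] by auto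
      finally show ?thesis using True unfolding ptp_def UB_def by auto
    next
      case False then show ?thesis unfolding ptp_def UB_def by auto
    qed
  qed
  then have "eqv i p a" unfolding eqv_def using p a by auto
  then show ?thesis using pCN br by auto
qed

end

definition qv :: "('u,'b,'c) atom list \<Rightarrow> nat \<Rightarrow> nat set" where
  "qv A a = insert a (\<Union> (atom_vars ` set A))"

lemma fin_atom_vars: "finite (atom_vars at)" by (cases at) auto
lemma qv_fin: "finite (qv A a)" unfolding qv_def using fin_atom_vars by auto

definition sat :: "('e,'u,'b,'c) struc \<Rightarrow> ('u,'b,'c) atom list \<Rightarrow> nat \<Rightarrow> 'e \<Rightarrow> bool" where
  "sat S A a x \<longleftrightarrow> (\<exists>v. v a = x \<and> (\<forall>t\<in>qv A a. v t \<in> dom S) \<and> (\<forall>at\<in>set A. atom_holds S v at))"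

definition overA :: "'u set \<Rightarrow> 'b set \<Rightarrow> 'c set \<Rightarrow> ('u,'b,'c) atom list \<Rightarrow> bool" where
  "overA UU BB CC A \<longleftrightarrow> (\<forall>at\<in>set A. atom_over UU BB CC at)"

lemma sat_ren: assumes "sat S (map (ren f) A) b x" "f a = b" shows "sat S A a x"
proof -
  obtain v where v: "v b = x" "\<forall>t\<in>qv (map (ren f) A) b. v t \<in> dom S" "\<forall>at\<in>set (map (ren f) A). atom_holds S v at"
    using assms unfolding sat_def by auto
  show ?thesis unfolding sat_def
  proof (intro exI[of _ "v \<circ> f"] conjI ballI)
    show "(v \<circ> f) a = x" using v assms by auto
  next
    fix t assume "t \<in> qv A a"
    then have "f t \<in> qv (map (ren f) A) b" using assms unfolding qv_def by (auto simp: ren_vars)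
    then show "(v \<circ> f) t \<in> dom S" using v by auto
  next
    fix at assume "at \<in> set A"
    then show "atom_holds S (v \<circ> f) at" using v by (auto simp: ren_holds[symmetric])
  qed
qed

context LL
begin

lemma conv: assumes "overA UB B Cs A"
  shows "\<exists>Q. cq_over UB B Cs Q \<and> fst Q = card (qv A a) - 1 \<and> (\<forall>y\<in>dom C. holds Cb Q y \<longleftrightarrow> sat Cb A a y)"
proof -
  let ?M = "qv A a - {a}"
  have finM: "finite ?M" using qv_fin by auto
  obtain h where h: "bij_betw h {0..<card ?M} ?M" using ex_bij_betw_nat_finite[OF finM] by auto
  have aq: "a \<in> qv A a" unfolding qv_def by auto
  have cq: "card (qv A a) = Suc (card ?M)" using qv_fin aq by (metis card.remove)
  define \<rho> where "\<rho> t = (if t = a then 0 else Suc (inv_into {0..<card ?M} h t))" for t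
  define h' where "h' i = (if i = 0 then a else h (i - 1))" for i
  have hj: "h j \<in> ?M" if "j < card ?M" for j using bij_betw_apply[OF h] that by auto
  have hs: "t \<in> h ` {0..<card ?M}" if "t \<in> ?M" for t using bij_betw_imp_surj_on[OF h] that by blast
  have r1: "h' (\<rho> t) = t" if "t \<in> qv A a" for t
  proof (cases "t = a")
    case True then show ?thesis unfolding \<rho>_def h'_def by simp
  next
    case False
    then have "t \<in> ?M" using that by blast
    then show ?thesis using False f_inv_into_f[OF hs] unfolding \<rho>_def h'_def by simp
  qed
  have r2: "\<rho> t < card (qv A a)" if "t \<in> qv A a" for t
  proof (cases "t = a")
    case True then show ?thesis unfolding \<rho>_def using cq by simp
  next
    case False
    then have "t \<in> ?M" using that by blast
    then have "inv_into {0..<card ?M} h t \<in> {0..<card ?M}" by (rule inv_into_into[OF hs])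
    then show ?thesis using False cq unfolding \<rho>_def by simp
  qed
  have r3: "\<rho> t = 0 \<Longrightarrow> t = a" for t unfolding \<rho>_def by (simp split: if_splits)
  have r4: "\<rho> a = 0" unfolding \<rho>_def by simp
  have h'1: "h' i \<in> qv A a" if "i < card (qv A a)" for i
  proof (cases i)
    case 0 then show ?thesis using aq unfolding h'_def by simp
  next
    case (Suc j) then have "j < card ?M" using that cq by simp
    then show ?thesis using hj[of j] Suc unfolding h'_def by simp
  qed
  let ?Q = "(card (qv A a) - 1, map (ren \<rho>) A)"
  have vq: "atom_vars at \<subseteq> qv A a" if "at \<in> set A" for at using that unfolding qv_def by auto
  have "cq_over UB B Cs ?Q" unfolding cq_over_def
  proof (intro ballI conjI)
    fix at assume "at \<in> set (snd ?Q)"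
    then obtain at0 where at0: "at0 \<in> set A" "at = ren \<rho> at0" by auto
    show "atom_over UB B Cs at" using assms at0 unfolding overA_def by (auto simp: ren_over)
    show "atom_vars at \<subseteq> {0..fst ?Q}" using at0 vq[OF at0(1)] r2 by (force simp: ren_vars)
  qed
  moreover have "\<forall>y\<in>dom C. holds Cb ?Q y \<longleftrightarrow> sat Cb A a y"
  proof (intro ballI iffI)
    fix y assume y: "y \<in> dom C" and "holds Cb ?Q y"
    then obtain v where v: "v 0 = y" "\<forall>i\<in>{1..card (qv A a) - 1}. v i \<in> dom C"
      "\<forall>at\<in>set A. atom_holds Cb v (ren \<rho> at)" unfolding holds_def by auto
    show "sat Cb A a y" unfolding sat_def
    proof (intro exI[of _ "v \<circ> \<rho>"] conjI ballI)
      show "(v \<circ> \<rho>) a = y" using v r4 by auto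
    next
      fix t assume t: "t \<in> qv A a"
      show "(v \<circ> \<rho>) t \<in> dom Cb"
      proof (cases "\<rho> t = 0")
        case True then show ?thesis using v y by auto
      next
        case False then show ?thesis using v r2[OF t] by auto
      qed
    next
      fix at assume "at \<in> set A" then show "atom_holds Cb (v \<circ> \<rho>) at" using v by (auto simp: ren_holds)
    qed
  next
    fix y assume y: "y \<in> dom C" and "sat Cb A a y"
    then obtain v where v: "v a = y" "\<forall>t\<in>qv A a. v t \<in> dom C" "\<forall>at\<in>set A. atom_holds Cb v at"
      unfolding sat_def by auto
    show "holds Cb ?Q y" unfolding holds_def
    proof (intro exI[of _ "v \<circ> h'"] conjI ballI)
      show "(v \<circ> h') 0 = y" using v unfolding h'_def by auto
    next
      fix i assume "i \<in> {1..fst ?Q}"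
      then have "i < card (qv A a)" by auto
      then show "(v \<circ> h') i \<in> dom Cb" using v h'1 by auto
    next
      fix at assume "at \<in> set (snd ?Q)"
      then obtain at0 where at0: "at0 \<in> set A" "at = ren \<rho> at0" by auto
      have "atom_holds Cb ((v \<circ> h') \<circ> \<rho>) at0 = atom_holds Cb v at0"
        by (rule holds_cong) (use vq[OF at0(1)] r1 in auto)
      then show "atom_holds Cb (v \<circ> h') at" using at0 v by (auto simp: ren_holds)
    qed
  qed
  ultimately show ?thesis by (intro exI[of _ ?Q]) auto
qed

lemma TR: assumes "lee J x y" "overA UB B Cs A" "card (qv A a) \<le> J" "sat Cb A a x"
  shows "sat Cb A a y"
proof -
  obtain Q where Q: "cq_over UB B Cs Q" "fst Q = card (qv A a) - 1" "\<forall>y\<in>dom C. holds Cb Q y \<longleftrightarrow> sat Cb A a y"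
    using conv[OF assms(2)] by blast
  have "card (qv A a) \<ge> 1" using qv_fin[of A a] unfolding qv_def by (metis card_0_eq empty_not_insert less_one linorder_not_le)
  then have "fst Q < J" using Q(2) assms(3) by auto
  then show ?thesis using lee_holds[OF assms(1) Q(1)] Q(3) assms lee_dom by blast
qed

end

lemma holds_key: "fst Q = fst Q' \<Longrightarrow> set (snd Q) = set (snd Q') \<Longrightarrow> holds S Q y = holds S Q' y"
  unfolding holds_def by auto

context LL
begin

definition AtU :: "nat \<Rightarrow> ('u + nat \<times> nat, 'b, 'c) atom set" where
  "AtU N = {at. atom_over UB B Cs at \<and> atom_vars at \<subseteq> {..<N}}"

lemma finAtU: "finite (AtU N)"
proof -
  have "AtU N \<subseteq> (\<lambda>(u,x). UAt u x) ` (UB \<times> {..<N}) \<union> (\<lambda>(R,x,y). BAt R x y) ` (B \<times> {..<N} \<times> {..<N})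
     \<union> (\<lambda>(x,c). EqC x c) ` ({..<N} \<times> Cs)"
  proof
    fix at assume "at \<in> AtU N"
    then show "at \<in> (\<lambda>(u,x). UAt u x) ` (UB \<times> {..<N}) \<union> (\<lambda>(R,x,y). BAt R x y) ` (B \<times> {..<N} \<times> {..<N})
     \<union> (\<lambda>(x,c). EqC x c) ` ({..<N} \<times> Cs)"
      unfolding AtU_def by (cases at) (auto simp: image_iff)
  qed
  moreover have "finite ((\<lambda>(u,x). UAt u x) ` (UB \<times> {..<N}) \<union> (\<lambda>(R,x,y). BAt R x y) ` (B \<times> {..<N} \<times> {..<N})
     \<union> (\<lambda>(x,c). EqC x c) ` ({..<N} \<times> Cs))" using finUB finB finCs by auto
  ultimately show ?thesis by (rule finite_subset)
qed

definition TT :: "nat \<Rightarrow> nat" where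
  "TT N = N * (card ({..<N} \<times> Pow (AtU N)) + 2)"

lemma Theta: assumes x: "x \<in> dom C" and N: "1 \<le> N"
  shows "\<exists>A. overA UB B Cs A \<and> card (qv A 0) \<le> TT N \<and> sat Cb A 0 x \<and> (\<forall>y\<in>dom C. sat Cb A 0 y \<longrightarrow> lee N x y)"
proof -
  define key where "key Q = (fst Q, set (snd Q))" for Q :: "('u + nat \<times> nat, 'b, 'c) cq"
  define KS where "KS = key ` ptpJ N x"
  have KSsub: "KS \<subseteq> {..<N} \<times> Pow (AtU N)"
  proof
    fix k assume "k \<in> KS"
    then obtain Q where Q: "Q \<in> ptpJ N x" "k = key Q" unfolding KS_def by auto
    then show "k \<in> {..<N} \<times> Pow (AtU N)" unfolding key_def ptp_def cq_over_def AtU_def UB_def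
      by (auto simp: subset_iff) (meson le_less_trans)
  qed
  have finP: "finite ({..<N} \<times> Pow (AtU N))" using finAtU by auto
  have finKS: "finite KS" using finite_subset[OF KSsub finP] .
  obtain ps where ps: "set ps = KS" "distinct ps" using finite_distinct_list[OF finKS] by auto
  have lenps: "length ps \<le> card ({..<N} \<times> Pow (AtU N))"
    using distinct_card[OF ps(2)] ps(1) card_mono[OF finP KSsub] by auto
  define rep where "rep k = (SOME Q. Q \<in> ptpJ N x \<and> key Q = k)" for k
  have rep: "rep k \<in> ptpJ N x \<and> key (rep k) = k" if "k \<in> KS" for k
    unfolding rep_def by (rule someI_ex) (use that in \<open>auto simp: KS_def\<close>)
  define QQ where "QQ i = rep (ps ! i)" for i
  have QQ: "QQ i \<in> ptpJ N x" "key (QQ i) = ps ! i" if "i < length ps" for i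
    using rep[of "ps ! i"] that ps(1) unfolding QQ_def by auto
  define blk where "blk i t = (if t = 0 then 0 else N * Suc i + t)" for i t :: nat
  define Th where "Th = concat (map (\<lambda>i. map (ren (blk i)) (snd (QQ i))) [0..<length ps])"
  have memTh: "at \<in> set Th \<longleftrightarrow> (\<exists>i<length ps. \<exists>at0\<in>set (snd (QQ i)). at = ren (blk i) at0)" for at
    unfolding Th_def by auto
  have QQo: "cq_over UB B Cs (QQ i)" "fst (QQ i) < N" if "i < length ps" for i
    using QQ(1)[OF that] unfolding ptp_def UB_def by auto
  have QQv: "t \<le> fst (QQ i)" if "i < length ps" "at0 \<in> set (snd (QQ i))" "t \<in> atom_vars at0" for i at0 t
  proof -
    have "atom_vars at0 \<subseteq> {0..fst (QQ i)}" using QQo(1)[OF that(1)] that(2) unfolding cq_over_def by blast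
    then show ?thesis using that(3) by auto
  qed
  have ov: "overA UB B Cs Th" unfolding overA_def
  proof
    fix at assume "at \<in> set Th"
    then obtain i at0 where "i < length ps" "at0 \<in> set (snd (QQ i))" "at = ren (blk i) at0" using memTh by auto
    then show "atom_over UB B Cs at" using QQo unfolding cq_over_def by (auto simp: ren_over)
  qed
  have "qv Th 0 \<subseteq> {..< N * (length ps + 2)}"
  proof
    fix t assume "t \<in> qv Th 0"
    then consider "t = 0" | at where "at \<in> set Th" "t \<in> atom_vars at" unfolding qv_def by auto
    then show "t \<in> {..< N * (length ps + 2)}"
    proof cases
      case 1 then show ?thesis using N by auto
    next
      case 2
      then obtain i at0 where i: "i < length ps" "at0 \<in> set (snd (QQ i))" "at = ren (blk i) at0" using memTh by auto
      then obtain t0 where t0: "t0 \<in> atom_vars at0" "t = blk i t0" using 2 by (auto simp: ren_vars)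
      have "t0 < N" using QQv[OF i(1,2) t0(1)] QQo(2)[OF i(1)] by auto
      then have "t < N * Suc i + N" using t0 unfolding blk_def by auto
      also have "N * Suc i + N = N * (i + 2)" by (simp add: algebra_simps)
      also have "\<dots> \<le> N * (length ps + 2)" using i(1) by auto
      finally show ?thesis by auto
    qed
  qed
  then have "card (qv Th 0) \<le> N * (length ps + 2)" by (metis card_lessThan card_mono finite_lessThan)
  also have "\<dots> \<le> TT N" unfolding TT_def using lenps by auto
  finally have sz: "card (qv Th 0) \<le> TT N" .
  define V where "V i = (SOME v. v 0 = x \<and> (\<forall>j\<in>{1..fst (QQ i)}. v j \<in> dom Cb) \<and> (\<forall>at\<in>set (snd (QQ i)). atom_holds Cb v at))" for i
  have V: "V i 0 = x \<and> (\<forall>j\<in>{1..fst (QQ i)}. V i j \<in> dom Cb) \<and> (\<forall>at\<in>set (snd (QQ i)). atom_holds Cb (V i) at)"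
    if "i < length ps" for i
  proof -
    have "holds Cb (QQ i) x" using QQ(1)[OF that] unfolding ptp_def by auto
    then show ?thesis unfolding V_def holds_def by (rule someI_ex)
  qed
  define \<nu> where "\<nu> t = (if t = 0 then x else if t div N - 1 < length ps then V (t div N - 1) (t mod N) else x)" for t
  have nublk: "\<nu> (blk i t) = V i t" if "i < length ps" "t < N" for i t
  proof (cases "t = 0")
    case True then show ?thesis using V[OF that(1)] unfolding \<nu>_def blk_def by auto
  next
    case False
    have "(N * Suc i + t) div N = (t + N * Suc i) div N" by (simp add: add.commute)
    also have "\<dots> = Suc i + t div N" by (rule div_mult_self2) (use N in auto)
    also have "t div N = 0" using that by simp
    finally have d: "(N * Suc i + t) div N = Suc i" by simp
    have "(N * Suc i + t) mod N = (t + N * Suc i) mod N" by (simp add: add.commute)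
    also have "\<dots> = t mod N" by (rule mod_mult_self2)
    also have "\<dots> = t" using that by simp
    finally have mo: "(N * Suc i + t) mod N = t" .
    show ?thesis using False d mo that unfolding \<nu>_def blk_def by auto
  qed
  have satx: "sat Cb Th 0 x" unfolding sat_def
  proof (intro exI[of _ \<nu>] conjI ballI)
    show "\<nu> 0 = x" unfolding \<nu>_def by auto
  next
    fix t assume "t \<in> qv Th 0"
    then consider "t = 0" | at where "at \<in> set Th" "t \<in> atom_vars at" unfolding qv_def by auto
    then show "\<nu> t \<in> dom Cb"
    proof cases
      case 1 then show ?thesis using x unfolding \<nu>_def by auto
    next
      case 2
      then obtain i at0 where i: "i < length ps" "at0 \<in> set (snd (QQ i))" "at = ren (blk i) at0" using memTh by auto
      then obtain t0 where t0: "t0 \<in> atom_vars at0" "t = blk i t0" using 2 by (auto simp: ren_vars)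
      have tN: "t0 < N" "t0 \<le> fst (QQ i)" using QQv[OF i(1,2) t0(1)] QQo(2)[OF i(1)] by auto
      have "V i t0 \<in> dom Cb" using V[OF i(1)] tN x by (cases "t0 = 0") auto
      then show ?thesis using nublk[OF i(1) tN(1)] t0 by auto
    qed
  next
    fix at assume "at \<in> set Th"
    then obtain i at0 where i: "i < length ps" "at0 \<in> set (snd (QQ i))" "at = ren (blk i) at0" using memTh by auto
    have "atom_holds Cb (\<nu> \<circ> blk i) at0 = atom_holds Cb (V i) at0"
    proof (rule holds_cong)
      fix t assume "t \<in> atom_vars at0"
      then have "t < N" using QQv[OF i(1,2)] QQo(2)[OF i(1)] by fastforce
      then show "(\<nu> \<circ> blk i) t = V i t" using nublk[OF i(1)] by auto
    qed
    then show "atom_holds Cb \<nu> at" using V[OF i(1)] i by (auto simp: ren_holds)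
  qed
  have char: "lee N x y" if y: "y \<in> dom C" and sy: "sat Cb Th 0 y" for y
  proof -
    obtain \<nu>' where nu: "\<nu>' 0 = y" "\<forall>t\<in>qv Th 0. \<nu>' t \<in> dom Cb" "\<forall>at\<in>set Th. atom_holds Cb \<nu>' at"
      using sy unfolding sat_def by auto
    have "ptpJ N x \<subseteq> ptpJ N y"
    proof
      fix Q assume Q: "Q \<in> ptpJ N x"
      then have "key Q \<in> set ps" using ps(1) unfolding KS_def by auto
      then obtain i where i: "i < length ps" "ps ! i = key Q" by (metis in_set_conv_nth)
      let ?W = "\<Union> (atom_vars ` set (snd (QQ i)))"
      define \<mu> where "\<mu> t = (if t \<in> ?W then \<nu>' (blk i t) else y)" for t
      have "holds Cb (QQ i) y" unfolding holds_def
      proof (intro exI[of _ \<mu>] conjI ballI)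
        show "\<mu> 0 = y" using nu unfolding \<mu>_def blk_def by auto
      next
        fix t assume "t \<in> {1..fst (QQ i)}"
        show "\<mu> t \<in> dom Cb"
        proof (cases "t \<in> ?W")
          case True
          then obtain at0 where at0: "at0 \<in> set (snd (QQ i))" "t \<in> atom_vars at0" by auto
          then have "ren (blk i) at0 \<in> set Th" using memTh i(1) by auto
          moreover have "blk i t \<in> atom_vars (ren (blk i) at0)" using at0 by (auto simp: ren_vars)
          ultimately have "blk i t \<in> qv Th 0" unfolding qv_def by auto
          then show ?thesis using nu True unfolding \<mu>_def by auto
        next
          case False then show ?thesis using y unfolding \<mu>_def by auto
        qed
      next
        fix at0 assume at0: "at0 \<in> set (snd (QQ i))"
        have "atom_holds Cb \<mu> at0 = atom_holds Cb (\<nu>' \<circ> blk i) at0"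
          by (rule holds_cong) (use at0 in \<open>auto simp: \<mu>_def\<close>)
        also have "\<dots> = atom_holds Cb \<nu>' (ren (blk i) at0)" by (simp add: ren_holds)
        also have "\<dots>"
        proof -
          have "ren (blk i) at0 \<in> set Th" using memTh i(1) at0 by auto
          then show ?thesis using nu(3) by blast
        qed
        finally show "atom_holds Cb \<mu> at0" .
      qed
      moreover have "key (QQ i) = key Q" using QQ(2)[OF i(1)] i(2) by auto
      ultimately have "holds Cb Q y" using holds_key[of "QQ i" Q Cb y] unfolding key_def by simp
      then show "Q \<in> ptpJ N y" using Q unfolding ptp_def by auto
    qed
    then show ?thesis unfolding lee_def using x y by auto
  qed
  show ?thesis using ov sz satx char by blast
qed

end

context LL
begin

definition loose :: "nat \<Rightarrow> ('u + nat \<times> nat, 'b, 'c) atom list \<Rightarrow> (nat \<Rightarrow> 'e) \<Rightarrow> bool" where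
  "loose j A w \<longleftrightarrow> (\<forall>at\<in>set A. case at of
      UAt u x \<Rightarrow> urel Cb u (w x)
    | EqC x c \<Rightarrow> w x = cval Cb c
    | BAt R x y \<Rightarrow> (\<exists>a b. eqv j a (w x) \<and> eqv j b (w y) \<and> brel Cb R a b))"

definition NC :: "('u + nat \<times> nat, 'b, 'c) atom list \<Rightarrow> nat \<Rightarrow> (nat \<Rightarrow> 'e) \<Rightarrow> nat set" where
  "NC A v0 w = {t \<in> qv A v0. w t \<notin> CC}"

definition gedge :: "('u + nat \<times> nat, 'b, 'c) atom list \<Rightarrow> nat \<Rightarrow> (nat \<Rightarrow> 'e) \<Rightarrow> nat \<Rightarrow> nat \<Rightarrow> bool" where
  "gedge A v0 w x y \<longleftrightarrow> (\<exists>R. BAt R x y \<in> set A) \<and> x \<in> NC A v0 w \<and> y \<in> NC A v0 w"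

definition sink where "sink A v0 w s \<longleftrightarrow> s \<in> NC A v0 w \<and> \<not> (\<exists>y. gedge A v0 w s y)"

definition Inst where "Inst A v0 w j \<longleftrightarrow> card (qv A v0) \<le> m \<and> overA UB B Cs A \<and> (\<forall>t\<in>qv A v0. w t \<in> dom C) \<and> loose j A w"

definition Sol where "Sol Ob A v0 w g \<longleftrightarrow> (\<forall>t\<in>qv A v0. g t \<in> dom C) \<and> (\<forall>at\<in>set A. atom_holds Cb g at) \<and>
   g v0 = w v0 \<and> (\<forall>t\<in>qv A v0. lee Ob (w t) (g t))"

lemma qv_atom: "at \<in> set A \<Longrightarrow> t \<in> atom_vars at \<Longrightarrow> t \<in> qv A a" unfolding qv_def by auto

lemma loose_B: "loose j A w \<Longrightarrow> BAt R x y \<in> set A \<Longrightarrow> \<exists>a b. eqv j a (w x) \<and> eqv j b (w y) \<and> brel Cb R a b"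
  unfolding loose_def by fastforce
lemma loose_U: "loose j A w \<Longrightarrow> UAt u x \<in> set A \<Longrightarrow> urel Cb u (w x)"
  unfolding loose_def by fastforce
lemma loose_E: "loose j A w \<Longrightarrow> EqC x c \<in> set A \<Longrightarrow> w x = cval Cb c"
  unfolding loose_def by fastforce
lemma overA_B: "overA UB B Cs A \<Longrightarrow> BAt R x y \<in> set A \<Longrightarrow> R \<in> B"
  unfolding overA_def by fastforce
lemma overA_E: "overA UB B Cs A \<Longrightarrow> EqC x c \<in> set A \<Longrightarrow> c \<in> Cs"
  unfolding overA_def by fastforce
lemma overA_U: "overA UB B Cs A \<Longrightarrow> UAt u x \<in> set A \<Longrightarrow> u \<in> UB"
  unfolding overA_def by fastforce

lemma dom_notCC: "x \<in> dom C \<Longrightarrow> x \<notin> CC \<Longrightarrow> x \<in> CN" unfolding Cnon_def by auto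

lemma L_exact: assumes "loose j A w" "2 \<le> j" "BAt R x y \<in> set A" "R \<in> B" "w x \<in> CC \<or> w y \<in> CC"
    "w x \<in> dom C" "w y \<in> dom C"
  shows "brel Cb R (w x) (w y)"
proof -
  obtain a b where ab: "eqv j a (w x)" "eqv j b (w y)" "brel Cb R a b" using loose_B[OF assms(1,3)] by auto
  have br: "brel C R a b" using ab brelCb assms by auto
  from assms(5) show ?thesis
  proof
    assume "w y \<in> CC"
    then have "b = w y" using eqv_CC ab assms by auto
    moreover obtain c where c: "c \<in> Cs" "w y = cval C c" using \<open>w y \<in> CC\<close> unfolding Ccon_def by auto
    ultimately have "brel C R (w x) (cval C c)"
      using lee_brel_const1[OF eqv_lee[OF ab(1)] assms(2,4) c(1)] br by auto
    then show ?thesis using c brelCb assms by auto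
  next
    assume "w x \<in> CC"
    then have "a = w x" using eqv_CC ab assms by auto
    moreover obtain c where c: "c \<in> Cs" "w x = cval C c" using \<open>w x \<in> CC\<close> unfolding Ccon_def by auto
    ultimately have "brel C R (cval C c) (w y)"
      using lee_brel_const2[OF eqv_lee[OF ab(2)] assms(2,4) c(1)] br by auto
    then show ?thesis using c brelCb assms by auto
  qed
qed

lemma CH:
  assumes lo: "loose j A w" and ov: "overA UB B Cs A" and dm: "\<forall>t\<in>qv A v0. w t \<in> dom C"
    and fS: "\<forall>x\<in>S. f x \<in> S \<and> gedge A v0 w x (f x)"
  shows "\<forall>y c J. y \<in> S \<longrightarrow> eqv J c (w ((f^^k) y)) \<longrightarrow> k + 2 \<le> J \<longrightarrow> J \<le> j \<longrightarrow>
     (\<exists>c'. eqv (J - k) c' (w y) \<and> (k = 0 \<longrightarrow> c' = c) \<and> (0 < k \<longrightarrow> c' \<in> Pk B Cs C (k - 1) c \<and> (c', c) \<in> rel\<^sup>+))"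
proof (induction k)
  case 0 then show ?case by auto
next
  case (Suc k)
  show ?case
  proof (intro allI impI)
    fix y c J assume y: "y \<in> S" and c: "eqv J c (w ((f ^^ Suc k) y))" and J: "Suc k + 2 \<le> J" "J \<le> j"
    have fy: "f y \<in> S" "gedge A v0 w y (f y)" using fS y by auto
    have "(f ^^ Suc k) y = (f ^^ k) (f y)" by (simp only: funpow_Suc_right comp_def)
    then obtain c'' where c'': "eqv (J - k) c'' (w (f y))" "k = 0 \<longrightarrow> c'' = c"
      "0 < k \<longrightarrow> c'' \<in> Pk B Cs C (k - 1) c \<and> (c'', c) \<in> rel\<^sup>+"
      using Suc.IH fy(1) c J by fastforce
    obtain R where R: "BAt R y (f y) \<in> set A" "y \<in> NC A v0 w" "f y \<in> NC A v0 w" using fy(2) unfolding gedge_def by auto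
    have RB: "R \<in> B" using overA_B[OF ov R(1)] .
    obtain a b where ab: "eqv j a (w y)" "eqv j b (w (f y))" "brel Cb R a b" using loose_B[OF lo R(1)] by auto
    have wy: "w y \<in> CN" "w (f y) \<in> CN" using R dm dom_notCC unfolding NC_def by auto
    have aCN: "a \<in> CN" using eqv_CN[OF ab(1) _ wy(1)] J by auto
    have bCN: "b \<in> CN" using eqv_CN[OF ab(2) _ wy(2)] J by auto
    have bc: "eqv (J - k) b c''" using eqv_trans[OF eqv_mono[OF ab(2), of "J - k"] eqv_sym[OF c''(1)]] J by auto
    have ar: "Suc (J - k - 1) \<le> J - k" "1 \<le> J - k - 1" using J by auto
    have abC: "brel C R a b" using ab(3) brelCb[OF RB] by auto
    obtain p where p: "p \<in> CN" "brel C R p c''" "eqv (J - k - 1) p a"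
      using PT[OF bc ar RB abC aCN bCN] by auto
    have c''CN: "c'' \<in> CN" using eqv_CN[OF eqv_sym[OF bc] _ bCN] J by auto
    have pP: "p \<in> Pset B Cs C c''" using p c''CN Pset_CN RB by auto
    have prel: "(p, c'') \<in> rel" using p c''CN RB unfolding rel_def by auto
    have "eqv (J - Suc k) p (w y)" using eqv_trans[OF p(3) eqv_mono[OF ab(1)]] J by auto
    moreover have "p \<in> Pk B Cs C k c \<and> (p, c) \<in> rel\<^sup>+"
    proof (cases k)
      case 0
      then have "c'' = c" using c'' by simp
      then show ?thesis using pP prel 0 by auto
    next
      case (Suc k')
      then have h1: "c'' \<in> Pk B Cs C k' c" "(c'', c) \<in> rel\<^sup>+" using c'' by auto
      have "p \<in> Pk B Cs C (Suc k') c" using h1(1) pP by (simp only: Pk.simps) blast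
      moreover have "(p, c) \<in> rel\<^sup>+" using prel h1(2) by (rule trancl_into_trancl2)
      ultimately show ?thesis using Suc by simp
    qed
    ultimately show "\<exists>c'. eqv (J - Suc k) c' (w y) \<and> (Suc k = 0 \<longrightarrow> c' = c) \<and>
        (0 < Suc k \<longrightarrow> c' \<in> Pk B Cs C (Suc k - 1) c \<and> (c', c) \<in> rel\<^sup>+)"
      by (intro exI[of _ p]) simp
  qed
qed

lemma CYC:
  assumes lo: "loose j A w" and ov: "overA UB B Cs A" and dm: "\<forall>t\<in>qv A v0. w t \<in> dom C"
    and card: "card (qv A v0) \<le> m" and j: "m + 2 \<le> j"
    and S: "S \<subseteq> NC A v0 w" "S \<noteq> {}" and succ: "\<forall>x\<in>S. \<exists>y\<in>S. gedge A v0 w x y"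
  shows False
proof -
  define f where "f x = (SOME y. y \<in> S \<and> gedge A v0 w x y)" for x
  have fS: "\<forall>x\<in>S. f x \<in> S \<and> gedge A v0 w x (f x)"
  proof
    fix x assume "x \<in> S"
    then have "\<exists>y. y \<in> S \<and> gedge A v0 w x y" using succ by blast
    then show "f x \<in> S \<and> gedge A v0 w x (f x)" unfolding f_def by (rule someI_ex)
  qed
  have Sq: "S \<subseteq> qv A v0" using S(1) unfolding NC_def by auto
  have finS: "finite S" using Sq qv_fin[of A v0] by (rule finite_subset)
  obtain x where x: "x \<in> S" using S by auto
  have it: "(f ^^ i) x \<in> S" for i by (induction i) (use x fS in auto)
  have cardS: "card S \<le> m" using card card_mono[OF qv_fin[of A v0] Sq] by simp
  have "\<not> inj_on (\<lambda>i. (f ^^ i) x) {..card S}"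
  proof
    assume "inj_on (\<lambda>i. (f ^^ i) x) {..card S}"
    then have "card {..card S} \<le> card S" using card_inj_on_le[of _ "{..card S}" S] it finS by auto
    then show False by auto
  qed
  then obtain a b where ab: "a \<le> card S" "b \<le> card S" "a \<noteq> b" "(f ^^ a) x = (f ^^ b) x"
    unfolding inj_on_def by auto
  obtain a' b' where ab': "a' < b'" "b' \<le> card S" "(f ^^ a') x = (f ^^ b') x"
    using ab by (metis linorder_neq_iff)
  define y where "y = (f ^^ a') x"
  define l where "l = b' - a'"
  have l: "0 < l" "l \<le> m" using ab' cardS unfolding l_def by auto
  have "(f ^^ l) y = (f ^^ (l + a')) x" unfolding y_def by (simp add: funpow_add)
  also have "l + a' = b'" using ab' unfolding l_def by auto
  finally have yl: "(f ^^ l) y = y" using ab' unfolding y_def by auto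
  have yS: "y \<in> S" using it unfolding y_def by auto
  have wy: "w y \<in> dom C" using yS S(1) dm unfolding NC_def by auto
  have "eqv j (w y) (w ((f ^^ l) y))" using yl eqv_refl[OF wy] by auto
  then obtain c' where c': "eqv (j - l) c' (w y)" "c' \<in> Pk B Cs C (l - 1) (w y)" "(c', w y) \<in> rel\<^sup>+"
    using CH[OF lo ov dm fS, of l] yS l j by fastforce
  have "c' \<noteq> w y" using c'(3) acyc unfolding acyclic_def by auto
  moreover have "col c' = col (w y)" using eqv_col[OF c'(1)] l j by auto
  moreover have "l - 1 \<le> m" using l by simp
  ultimately show False using hue[OF wy c'(2)] by blast
qed

lemma SaV: assumes "sink A v0 w s" "at \<in> set A" "s \<in> atom_vars at" "t \<in> atom_vars at"
  shows "t = s \<or> gedge A v0 w t s \<or> w t \<in> CC"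
proof -
  have tq: "t \<in> qv A v0" using qv_atom assms by auto
  have sq: "s \<in> NC A v0 w" using assms unfolding sink_def by auto
  show ?thesis
  proof (cases at)
    case (BAt R x y)
    show ?thesis
    proof (cases "t = s \<or> w t \<in> CC")
      case True then show ?thesis by auto
    next
      case False
      then have tN: "t \<in> NC A v0 w" using tq unfolding NC_def by auto
      have "(x = s \<and> y = t) \<or> (x = t \<and> y = s)" using assms(3,4) False BAt by auto
      then show ?thesis
      proof
        assume "x = s \<and> y = t"
        then have "gedge A v0 w s t" using BAt assms(2) tN sq unfolding gedge_def by auto
        then show ?thesis using assms(1) unfolding sink_def by auto
      next
        assume "x = t \<and> y = s"
        then show ?thesis using BAt assms(2) tN sq unfolding gedge_def by auto
      qed
    qed
  qed (use assms in auto)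
qed

lemma Sa_holds:
  assumes lo: "loose j A w" and ov: "overA UB B Cs A" and dm: "\<forall>t\<in>qv A v0. w t \<in> dom C" and j: "2 \<le> j"
    and sk: "sink A v0 w s" and at: "at \<in> set A" "s \<in> atom_vars at"
    and ts: "\<tau> s = w s" and tc: "\<And>x. x \<in> qv A v0 \<Longrightarrow> w x \<in> CC \<Longrightarrow> \<tau> x = w x"
    and tp: "\<And>u R. gedge A v0 w u s \<Longrightarrow> BAt R u s \<in> set A \<Longrightarrow> brel Cb R (\<tau> u) (w s)"
  shows "atom_holds Cb \<tau> at"
proof (cases at)
  case (UAt u x)
  then show ?thesis using loose_U[OF lo] at ts by auto
next
  case (EqC x c)
  then show ?thesis using loose_E[OF lo] at ts by auto
next
  case (BAt R x y)
  have RB: "R \<in> B" using overA_B[OF ov] at BAt by auto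
  have xq: "x \<in> qv A v0" "y \<in> qv A v0" using qv_atom[OF at(1)] BAt by auto
  have sN: "s \<in> NC A v0 w" using sk unfolding sink_def by auto
  have vx: "x = s \<or> gedge A v0 w x s \<or> w x \<in> CC" using SaV[OF sk at, of x] BAt by auto
  have vy: "y = s \<or> gedge A v0 w y s \<or> w y \<in> CC" using SaV[OF sk at, of y] BAt by auto
  have notsy: "\<not> gedge A v0 w s y" using sk unfolding sink_def by auto
  show ?thesis
  proof (cases "x = s")
    case True
    have "w y \<in> CC"
    proof (rule ccontr)
      assume "w y \<notin> CC"
      then have "y \<in> NC A v0 w" using xq unfolding NC_def by auto
      then have "gedge A v0 w s y" using BAt at True sN unfolding gedge_def by auto
      then show False using notsy by auto
    qed
    then have "brel Cb R (w x) (w y)" using L_exact[OF lo j _ RB] at BAt dm xq by auto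
    then show ?thesis using True BAt ts tc[OF xq(2) \<open>w y \<in> CC\<close>] by auto
  next
    case False
    then have ys: "y = s" using BAt at(2) by auto
    from vx False show ?thesis
    proof (elim disjE)
      assume "gedge A v0 w x s"
      then show ?thesis using tp[of x R] BAt at ys ts by auto
    next
      assume wx: "w x \<in> CC"
      then have "brel Cb R (w x) (w y)" using L_exact[OF lo j _ RB] at BAt dm xq by auto
      then show ?thesis using BAt ts tc[OF xq(1) wx] ys by auto
    qed simp
  qed
qed

end

locale EL = LL +
  fixes A and v0 :: nat and w and j :: nat and s :: nat
  assumes inst: "Inst A v0 w j" and jm: "m + 3 \<le> j" and sk: "sink A v0 w s" and parne: "\<exists>u. gedge A v0 w u s"
begin

lemma cardm: "card (qv A v0) \<le> m" and ov: "overA UB B Cs A" and dm: "\<forall>t\<in>qv A v0. w t \<in> dom C"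
  and lo: "loose j A w"
  using inst unfolding Inst_def by auto

definition Par where "Par = {u. gedge A v0 w u s}"

lemma sNC: "s \<in> NC A v0 w" using sk unfolding sink_def by auto
lemma sq: "s \<in> qv A v0" using sNC unfolding NC_def by auto
lemma wsCN: "w s \<in> CN" using sNC dm dom_notCC unfolding NC_def by auto
lemma Par_NC: "u \<in> Par \<Longrightarrow> u \<in> NC A v0 w" unfolding Par_def gedge_def by auto
lemma Par_q: "u \<in> Par \<Longrightarrow> u \<in> qv A v0" using Par_NC unfolding NC_def by auto
lemma Par_CN: "u \<in> Par \<Longrightarrow> w u \<in> CN" using Par_NC dm dom_notCC unfolding NC_def by auto
lemma s_nPar: "s \<notin> Par" using sk unfolding sink_def Par_def by auto
lemma finPar: "finite Par" using Par_q qv_fin[of A v0] by (meson finite_subset subsetI)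
lemma Par_ne: "Par \<noteq> {}" using parne unfolding Par_def by auto

lemma pexR: assumes "BAt R u s \<in> set A" "u \<in> NC A v0 w"
  shows "\<exists>q\<in>CN. brel C R q (w s) \<and> eqv (j - 1) q (w u)"
proof -
  have RB: "R \<in> B" using overA_B[OF ov assms(1)] .
  obtain a b where ab: "eqv j a (w u)" "eqv j b (w s)" "brel Cb R a b" using loose_B[OF lo assms(1)] by auto
  have wu: "w u \<in> CN" using assms(2) dm dom_notCC unfolding NC_def by auto
  have aCN: "a \<in> CN" using eqv_CN[OF ab(1) _ wu] jm by auto
  have bCN: "b \<in> CN" using eqv_CN[OF ab(2) _ wsCN] jm by auto
  have ar: "Suc (j - 1) \<le> j" "1 \<le> j - 1" using jm by auto
  have abC: "brel C R a b" using ab(3) brelCb[OF RB] by auto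
  obtain q where q: "q \<in> CN" "brel C R q (w s)" "eqv (j - 1) q a" using PT[OF ab(2) ar RB abC aCN bCN] by auto
  then show ?thesis using eqv_trans[OF q(3) eqv_mono[OF ab(1)]] by auto
qed

lemma pp_uniq: assumes "BAt R u s \<in> set A" "u \<in> NC A v0 w" "q \<in> CN" "brel C R q (w s)"
  shows "eqv (j - 1) q (w u)"
proof -
  obtain q' where q': "q' \<in> CN" "brel C R q' (w s)" "eqv (j - 1) q' (w u)" using pexR[OF assms(1,2)] by auto
  have "q = q'" using par_uniq[OF overA_B[OF ov assms(1)] wsCN assms(3) q'(1) assms(4) q'(2)] .
  then show ?thesis using q' by auto
qed

definition pp where "pp u = (SOME q. q \<in> CN \<and> (\<exists>R. BAt R u s \<in> set A \<and> brel C R q (w s)))"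

lemma pp: assumes "u \<in> Par"
  shows "pp u \<in> CN" "eqv (j - 1) (pp u) (w u)" "\<And>R. BAt R u s \<in> set A \<Longrightarrow> brel C R (pp u) (w s)"
    "pp u \<in> Pset B Cs C (w s)" "pp u \<in> dom C"
proof -
  obtain R0 where R0: "BAt R0 u s \<in> set A" using assms unfolding Par_def gedge_def by auto
  have uN: "u \<in> NC A v0 w" using Par_NC[OF assms] .
  obtain q where "q \<in> CN" "brel C R0 q (w s)" using pexR[OF R0 uN] by auto
  then have ex: "\<exists>q. q \<in> CN \<and> (\<exists>R. BAt R u s \<in> set A \<and> brel C R q (w s))" using R0 by auto
  have h: "pp u \<in> CN \<and> (\<exists>R. BAt R u s \<in> set A \<and> brel C R (pp u) (w s))"
    unfolding pp_def by (rule someI_ex[OF ex])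
  then show p1: "pp u \<in> CN" by auto
  then show p5: "pp u \<in> dom C" using CN_dom by auto
  obtain R1 where R1: "BAt R1 u s \<in> set A" "brel C R1 (pp u) (w s)" using h by auto
  show p2: "eqv (j - 1) (pp u) (w u)" using pp_uniq[OF R1(1) uN p1 R1(2)] .
  show p4: "pp u \<in> Pset B Cs C (w s)" using Pset_CN[OF wsCN] p1 R1 overA_B[OF ov R1(1)] by auto
  fix R assume R: "BAt R u s \<in> set A"
  obtain q where q: "q \<in> CN" "brel C R q (w s)" "eqv (j - 1) q (w u)" using pexR[OF R uN] by auto
  have "col q = col (pp u)" using eqv_col[OF eqv_trans[OF q(3) eqv_sym[OF p2]]] jm by auto
  moreover have "q \<in> Pset B Cs C (w s)" using Pset_CN[OF wsCN] q overA_B[OF ov R] by auto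
  ultimately have "q = pp u" using hue_par[OF wsCN _ p4] by auto
  then show "brel C R (pp u) (w s)" using q by auto
qed

definition Pst where "Pst = pp ` Par"

lemma low_ex: "\<exists>z\<in>Pst. \<forall>q\<in>Pst. q \<in> Pset B Cs C z"
proof -
  define r where "r = {(a, b). a \<in> Pst \<and> b \<in> Pst \<and> a \<noteq> b \<and> a \<in> Pset B Cs C b}"
  have PstCN: "Pst \<subseteq> CN" using pp unfolding Pst_def by auto
  have "r \<subseteq> rel" unfolding r_def using Pset_rel PstCN by auto
  then have acr: "acyclic r" using acyc acyclic_subset by auto
  have finPst: "finite Pst" using finPar unfolding Pst_def by auto
  have "r \<subseteq> Pst \<times> Pst" unfolding r_def by auto
  then have "finite r" using finPst by (meson finite_SigmaI finite_subset)
  then have wfr: "wf (r\<inverse>)" using finite_acyclic_wf_converse acr by auto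
  obtain x where x: "x \<in> Pst" using Par_ne unfolding Pst_def by auto
  obtain z where z: "z \<in> Pst" "\<And>y. (y, z) \<in> r\<inverse> \<Longrightarrow> y \<notin> Pst" using wfE_min[OF wfr x] by blast
  have "\<forall>q\<in>Pst. q \<in> Pset B Cs C z"
  proof
    fix q assume q: "q \<in> Pst"
    have qs: "q \<in> Pset B Cs C (w s)" "z \<in> Pset B Cs C (w s)" using q z pp unfolding Pst_def by auto
    from compar[OF wsCN qs] show "q \<in> Pset B Cs C z"
    proof
      assume "z \<in> Pset B Cs C q"
      then have "z = q" using z(2)[of q] q z(1) unfolding r_def by auto
      then show ?thesis using Pset_self by auto
    qed
  qed
  then show ?thesis using z by auto
qed

definition plow where "plow = (SOME z. z \<in> Pst \<and> (\<forall>q\<in>Pst. q \<in> Pset B Cs C z))"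
lemma plow: "plow \<in> Pst" "\<And>q. q \<in> Pst \<Longrightarrow> q \<in> Pset B Cs C plow"
  using someI_ex[OF low_ex[unfolded Bex_def]] unfolding plow_def by auto
lemma plowCN: "plow \<in> CN" using plow pp unfolding Pst_def by auto

definition rep where "rep q = (if v0 \<in> Par \<and> pp v0 = q then v0 else (SOME u. u \<in> Par \<and> pp u = q))"
lemma rep: "q \<in> Pst \<Longrightarrow> rep q \<in> Par \<and> pp (rep q) = q"
proof -
  assume q: "q \<in> Pst"
  then have ex: "\<exists>u. u \<in> Par \<and> pp u = q" unfolding Pst_def by auto
  show ?thesis unfolding rep_def using someI_ex[OF ex] by auto
qed

definition rho where "rho t = (if t \<in> Par then rep (pp t) else t)"
lemma rho_Par: "t \<in> Par \<Longrightarrow> rho t \<in> Par \<and> pp (rho t) = pp t"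
  unfolding rho_def using rep unfolding Pst_def by auto
lemma rho_nPar: "t \<notin> Par \<Longrightarrow> rho t = t" unfolding rho_def by auto
lemma rho_v0: "rho v0 = v0" unfolding rho_def rep_def by auto
lemma rho_s: "rho s = s" using rho_nPar s_nPar by auto
lemma rho_q: "t \<in> qv A v0 \<Longrightarrow> rho t \<in> qv A v0" using rho_Par rho_nPar Par_q by (cases "t \<in> Par") auto

definition ell where "ell = rep plow"
lemma ell: "ell \<in> Par" "pp ell = plow" "rho ell = ell"
  using rep[OF plow(1)] unfolding ell_def rho_def by auto
lemma rho_low: "t \<in> Par \<Longrightarrow> pp t = plow \<Longrightarrow> rho t = ell"
  unfolding rho_def ell_def by auto

definition Ecf where "Ecf q = (SOME R. R \<in> B \<and> brel C R q plow)"
lemma Ecf: assumes "q \<in> Pst" "q \<noteq> plow" shows "Ecf q \<in> B \<and> brel C (Ecf q) q plow"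
proof -
  have "q \<in> Pset B Cs C plow" using plow assms by auto
  then have "\<exists>R. R \<in> B \<and> brel C R q plow" using Pset_CN[OF plowCN] assms by auto
  then show ?thesis unfolding Ecf_def by (rule someI_ex)
qed

definition Parl where "Parl = sorted_list_of_set Par"
lemma Parl: "set Parl = Par" unfolding Parl_def using finPar by auto

definition cfg where
  "cfg = map (\<lambda>u. BAt (Ecf (pp u)) (rho u) ell) (filter (\<lambda>u. pp u \<noteq> plow) Parl)
       @ map (\<lambda>u. UAt (Inr (col (pp u))) (rho u)) Parl @ filter (\<lambda>_. False) A"
definition A1 where "A1 = filter (\<lambda>at. s \<notin> atom_vars at) A"
definition Sa where "Sa = filter (\<lambda>at. s \<in> atom_vars at) A"
definition A2 where "A2 = map (ren rho) A1 @ cfg"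

lemma set_cfg: "set cfg = (\<lambda>u. BAt (Ecf (pp u)) (rho u) ell) ` {u\<in>Par. pp u \<noteq> plow} \<union> (\<lambda>u. UAt (Inr (col (pp u))) (rho u)) ` Par"
  unfolding cfg_def using Parl by auto

lemma cfg_holds: "(\<forall>at\<in>set cfg. atom_holds Cb \<nu> at) \<longleftrightarrow>
   (\<forall>u\<in>Par. urel Cb (Inr (col (pp u))) (\<nu> (rho u)) \<and> (pp u \<noteq> plow \<longrightarrow> brel C (Ecf (pp u)) (\<nu> (rho u)) (\<nu> ell)))"
proof -
  have br: "\<And>u. u \<in> Par \<Longrightarrow> pp u \<noteq> plow \<Longrightarrow> brel Cb (Ecf (pp u)) (\<nu> (rho u)) (\<nu> ell) = brel C (Ecf (pp u)) (\<nu> (rho u)) (\<nu> ell)"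
    using Ecf brelCb unfolding Pst_def by auto
  show ?thesis
  proof
    assume h: "\<forall>at\<in>set cfg. atom_holds Cb \<nu> at"
    show "\<forall>u\<in>Par. urel Cb (Inr (col (pp u))) (\<nu> (rho u)) \<and> (pp u \<noteq> plow \<longrightarrow> brel C (Ecf (pp u)) (\<nu> (rho u)) (\<nu> ell))"
    proof (intro ballI conjI impI)
      fix u assume u: "u \<in> Par"
      have "UAt (Inr (col (pp u))) (rho u) \<in> set cfg" using u set_cfg by auto
      then show "urel Cb (Inr (col (pp u))) (\<nu> (rho u))" using h by fastforce
      assume "pp u \<noteq> plow"
      then have "BAt (Ecf (pp u)) (rho u) ell \<in> set cfg" using u set_cfg by auto
      then have "brel Cb (Ecf (pp u)) (\<nu> (rho u)) (\<nu> ell)" using h by fastforce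
      then show "brel C (Ecf (pp u)) (\<nu> (rho u)) (\<nu> ell)" using br u \<open>pp u \<noteq> plow\<close> by auto
    qed
  next
    assume h: "\<forall>u\<in>Par. urel Cb (Inr (col (pp u))) (\<nu> (rho u)) \<and> (pp u \<noteq> plow \<longrightarrow> brel C (Ecf (pp u)) (\<nu> (rho u)) (\<nu> ell))"
    show "\<forall>aa\<in>set cfg. atom_holds Cb \<nu> aa"
    proof
      fix aa assume "aa \<in> set cfg"
      then consider u where "u \<in> Par" "pp u \<noteq> plow" "aa = BAt (Ecf (pp u)) (rho u) ell"
        | u where "u \<in> Par" "aa = UAt (Inr (col (pp u))) (rho u)" unfolding set_cfg by blast
      then show "atom_holds Cb \<nu> aa"
      proof cases
        case 1 then show ?thesis using h br by auto
      next
        case 2 then show ?thesis using h by auto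
      qed
    qed
  qed
qed

lemma ell_img: "ell \<in> rho ` Par" using ell by (metis imageI)

lemma cfg_vars: assumes "at \<in> set cfg" shows "atom_vars at \<subseteq> rho ` Par"
proof -
  from assms consider u where "u \<in> Par" "pp u \<noteq> plow" "at = BAt (Ecf (pp u)) (rho u) ell"
        | u where "u \<in> Par" "at = UAt (Inr (col (pp u))) (rho u)" unfolding set_cfg by blast
  then show ?thesis
  proof cases
    case 1 then show ?thesis using ell_img by auto
  next
    case 2 then show ?thesis by auto
  qed
qed

lemma cfg_sigma: assumes "\<And>u. u \<in> Par \<Longrightarrow> \<sigma> (rho u) = pp u" shows "\<forall>at\<in>set cfg. atom_holds Cb \<sigma> at"
proof -
  have "\<sigma> ell = plow" using assms[of ell] ell by auto
  then show ?thesis unfolding cfg_holds using assms pp col Ecf unfolding Pst_def by auto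
qed

lemma cfg_CN: assumes "\<forall>at\<in>set cfg. atom_holds Cb \<nu> at" "u \<in> Par" "\<nu> (rho u) \<in> dom C"
  shows "\<nu> (rho u) \<in> CN"
proof -
  have "urel Cb (Inr (col (pp u))) (\<nu> (rho u))" using assms cfg_holds by auto
  then have "col (pp u) = col (\<nu> (rho u))" using col_uniq[OF assms(3)] col[OF pp(5)[OF assms(2)]] by auto
  then have "\<nu> (rho u) \<notin> CC" using NCC[OF pp(1)[OF assms(2)]] by auto
  then show ?thesis using assms(3) dom_notCC by auto
qed

lemma cfg_uniq: assumes "\<forall>at\<in>set cfg. atom_holds Cb \<nu>1 at" "\<forall>at\<in>set cfg. atom_holds Cb \<nu>2 at"
  "\<nu>1 ell = \<nu>2 ell" "\<And>u. u \<in> Par \<Longrightarrow> \<nu>1 (rho u) \<in> dom C \<and> \<nu>2 (rho u) \<in> dom C" "u \<in> Par"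
  shows "\<nu>1 (rho u) = \<nu>2 (rho u)"
proof (cases "pp u = plow")
  case True then show ?thesis using rho_low assms by auto
next
  case False
  have e1: "\<nu>1 ell \<in> CN" using cfg_CN[OF assms(1) ell(1)] assms(4)[OF ell(1)] ell by auto
  have c1: "\<nu>1 (rho u) \<in> CN" "\<nu>2 (rho u) \<in> CN" using cfg_CN assms by auto
  have b: "brel C (Ecf (pp u)) (\<nu>1 (rho u)) (\<nu>1 ell)" "brel C (Ecf (pp u)) (\<nu>2 (rho u)) (\<nu>1 ell)"
    using assms False cfg_holds by auto
  have "Ecf (pp u) \<in> B" using Ecf False assms(5) unfolding Pst_def by auto
  then show ?thesis using par_uniq[OF _ e1 c1] b by auto
qed

end

context EL
begin

lemma A1_vars: "at \<in> set A1 \<Longrightarrow> atom_vars at \<subseteq> qv A v0 - {s}"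
  unfolding A1_def using qv_atom by fastforce
lemma A1_A: "set A1 \<subseteq> set A" unfolding A1_def by auto
lemma Sa_mem: "at \<in> set A \<Longrightarrow> s \<in> atom_vars at \<Longrightarrow> at \<in> set Sa" unfolding Sa_def by auto
lemma Sa_A: "set Sa \<subseteq> set A" unfolding Sa_def by auto
lemma A1_mem: "at \<in> set A \<Longrightarrow> s \<notin> atom_vars at \<Longrightarrow> at \<in> set A1" unfolding A1_def by auto
lemma Par_sub: "Par \<subseteq> qv A v0 - {s}" using Par_q s_nPar by auto
lemma set_A2: "set A2 = ren rho ` set A1 \<union> set cfg" unfolding A2_def by auto

lemma qvA2: "qv A2 a \<subseteq> insert a (rho ` (qv A v0 - {s}))"
proof
  fix t assume "t \<in> qv A2 a"
  then consider "t = a" | at where "at \<in> set A2" "t \<in> atom_vars at" unfolding qv_def by auto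
  then show "t \<in> insert a (rho ` (qv A v0 - {s}))"
  proof cases
    case 2
    then consider at0 where "at0 \<in> set A1" "at = ren rho at0" | "at \<in> set cfg" using set_A2 by auto
    then show ?thesis
    proof cases
      case 1 then show ?thesis using 2 A1_vars by (auto simp: ren_vars)
    next
      case 2
      then have "t \<in> rho ` Par" using cfg_vars \<open>t \<in> atom_vars at\<close> by auto
      then show ?thesis using Par_sub by auto
    qed
  qed auto
qed

lemma s_notin: "s \<notin> rho ` (qv A v0 - {s})"
proof
  assume "s \<in> rho ` (qv A v0 - {s})"
  then obtain t where t: "t \<in> qv A v0" "t \<noteq> s" "s = rho t" by auto
  show False
  proof (cases "t \<in> Par")
    case True then show False using rho_Par[OF True] t s_nPar by auto
  next
    case False then show False using rho_nPar t by auto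
  qed
qed

lemma card2: assumes "a \<in> rho ` (qv A v0 - {s})" shows "card (qv A2 a) < card (qv A v0)"
proof -
  have "qv A2 a \<subseteq> rho ` (qv A v0 - {s})" using qvA2 assms by auto
  moreover have "finite (rho ` (qv A v0 - {s}))" by (intro finite_imageI finite_Diff qv_fin)
  ultimately have "card (qv A2 a) \<le> card (rho ` (qv A v0 - {s}))" by (intro card_mono)
  also have "\<dots> \<le> card (qv A v0 - {s})" by (rule card_image_le) (use qv_fin in auto)
  also have "\<dots> < card (qv A v0)" using sq qv_fin by (meson card_Diff1_less)
  finally show ?thesis .
qed

lemma ovA2: "overA UB B Cs A2"
  unfolding overA_def
proof
  fix at assume "at \<in> set A2"
  then consider at0 where "at0 \<in> set A1" "at = ren rho at0" | "at \<in> set cfg" using set_A2 by auto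
  then show "atom_over UB B Cs at"
  proof cases
    case 1 then show ?thesis using ov A1_A unfolding overA_def by (auto simp: ren_over)
  next
    case 2
    then consider u where "u \<in> Par" "pp u \<noteq> plow" "at = BAt (Ecf (pp u)) (rho u) ell"
        | u where "u \<in> Par" "at = UAt (Inr (col (pp u))) (rho u)" unfolding set_cfg by blast
    then show ?thesis
    proof cases
      case 1 then show ?thesis using Ecf unfolding Pst_def by auto
    next
      case 2 then show ?thesis using col pp(5) unfolding UB_def by auto
    qed
  qed
qed

lemma COV: assumes "t \<in> qv A v0" "t \<noteq> s" "t \<noteq> v0" "w t \<notin> CC" shows "rho t \<in> qv A2 a"
proof -
  obtain at where at: "at \<in> set A" "t \<in> atom_vars at" using assms(1,3) unfolding qv_def by auto
  show ?thesis
  proof (cases "s \<in> atom_vars at")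
    case False
    then have "ren rho at \<in> set A2" using A1_mem[OF at(1)] set_A2 by auto
    moreover have "rho t \<in> atom_vars (ren rho at)" using at(2) by (auto simp: ren_vars)
    ultimately show ?thesis by (rule qv_atom)
  next
    case True
    have "gedge A v0 w t s" using SaV[OF sk at(1) True at(2)] assms by auto
    then have "t \<in> Par" unfolding Par_def by auto
    then have "UAt (Inr (col (pp t))) (rho t) \<in> set A2" using set_A2 set_cfg by auto
    then show ?thesis unfolding qv_def by force
  qed
qed

definition w2 where "w2 t = (if t \<in> Par then pp t else w t)"

context
  fixes w' assumes W1: "\<And>t. t \<in> Par \<Longrightarrow> eqv (j - 1) (w' (rho t)) (pp t)"
    and W2: "\<And>t. t \<in> qv A v0 \<Longrightarrow> t \<noteq> s \<Longrightarrow> t \<notin> Par \<Longrightarrow> w' t = w t"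
begin

lemma E1: assumes "t \<in> qv A v0" "t \<noteq> s" shows "eqv (j - 1) (w' (rho t)) (w t)"
proof (cases "t \<in> Par")
  case True then show ?thesis using eqv_trans[OF W1 pp(2)] by auto
next
  case False then show ?thesis using rho_nPar W2 assms eqv_refl dm by auto
qed

lemma dom2: "t \<in> rho ` (qv A v0 - {s}) \<Longrightarrow> w' t \<in> dom C"
  using E1 eqv_dom by blast

lemma loose2: "loose (j - 1) A2 w'"
  unfolding loose_def
proof
  fix at assume "at \<in> set A2"
  then consider at0 where "at0 \<in> set A1" "at = ren rho at0" | "at \<in> set cfg" using set_A2 by auto
  then show "case at of UAt u x \<Rightarrow> urel Cb u (w' x) | EqC x c \<Rightarrow> w' x = cval Cb c
    | BAt R x y \<Rightarrow> \<exists>a b. eqv (j - 1) a (w' x) \<and> eqv (j - 1) b (w' y) \<and> brel Cb R a b"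
  proof cases
    case 1
    have at0A: "at0 \<in> set A" using 1 A1_A by auto
    have vs: "atom_vars at0 \<subseteq> qv A v0 - {s}" using A1_vars 1 by auto
    show ?thesis
    proof (cases at0)
      case (UAt u x)
      have "urel Cb u (w x)" using loose_U[OF lo] at0A UAt by auto
      moreover have "eqv (j - 1) (w x) (w' (rho x))" using eqv_sym[OF E1] vs UAt by auto
      moreover have "u \<in> UB" using overA_U[OF ov] at0A UAt by auto
      ultimately have "urel Cb u (w' (rho x))" using lee_urel[OF eqv_lee] jm by auto
      then show ?thesis using 1 UAt by auto
    next
      case (EqC x c)
      have wx: "w x = cval Cb c" using loose_E[OF lo] at0A EqC by auto
      have cC: "c \<in> Cs" using overA_E[OF ov] at0A EqC by auto
      then have "w x \<in> CC" using wx cvalCb unfolding Ccon_def by auto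
      then have "x \<notin> Par" using Par_NC unfolding NC_def by auto
      moreover have "x \<in> qv A v0" "x \<noteq> s" using vs EqC by auto
      ultimately have "w' (rho x) = w x" using rho_nPar W2 by auto
      then show ?thesis using 1 EqC wx by auto
    next
      case (BAt R x y)
      obtain a b where ab: "eqv j a (w x)" "eqv j b (w y)" "brel Cb R a b" using loose_B[OF lo] at0A BAt by blast
      have "eqv (j - 1) a (w' (rho x))" using eqv_trans[OF eqv_mono[OF ab(1)] eqv_sym[OF E1]] vs BAt by auto
      moreover have "eqv (j - 1) b (w' (rho y))" using eqv_trans[OF eqv_mono[OF ab(2)] eqv_sym[OF E1]] vs BAt by auto
      ultimately show ?thesis using 1 BAt ab(3) by auto
    qed
  next
    case 2
    then consider u where "u \<in> Par" "pp u \<noteq> plow" "at = BAt (Ecf (pp u)) (rho u) ell"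
        | u where "u \<in> Par" "at = UAt (Inr (col (pp u))) (rho u)" unfolding set_cfg by blast
    then show ?thesis
    proof cases
      case 1
      have "eqv (j - 1) (pp u) (w' (rho u))" using eqv_sym[OF W1[OF 1(1)]] .
      moreover have "eqv (j - 1) plow (w' ell)" using eqv_sym[OF W1[OF ell(1)]] ell by auto
      moreover have "brel Cb (Ecf (pp u)) (pp u) plow" using Ecf 1 brelCb unfolding Pst_def by auto
      ultimately show ?thesis using 1 by auto
    next
      case 2
      have e: "eqv (j - 1) (w' (rho u)) (pp u)" using W1 2 by auto
      then have ce: "col (w' (rho u)) = col (pp u)" using eqv_col jm by auto
      have "urel Cb (Inr (col (w' (rho u)))) (w' (rho u))" using col eqv_dom[OF e] by auto
      then show ?thesis using 2 ce by auto
    qed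
  qed
qed

lemma recon:
  assumes G1: "\<forall>at\<in>set A2. atom_holds Cb g'' at" and G2: "\<forall>t\<in>qv A2 a. g'' t \<in> dom C"
    and G3: "\<forall>t\<in>qv A2 a. lee Oo (w' t) (g'' t)" and O: "1 \<le> Oo" "Ob \<le> Oo" "Ob \<le> j - 1"
    and anc: "v0 \<noteq> s \<Longrightarrow> rho v0 \<in> qv A2 a"
    and g: "\<And>t. g t = (if t = s then z else if w t \<in> CC then w t else g'' (rho t))"
  shows "\<forall>at\<in>set A1. atom_holds Cb g at" "\<forall>t\<in>qv A v0 - {s}. g t \<in> dom C \<and> lee Ob (w t) (g t)"
proof -
  have constv: "g'' t = w t" if tt: "t \<in> qv A2 a" "t \<in> qv A v0" "t \<noteq> s" "w t \<in> CC" for t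
  proof -
    have tP: "t \<notin> Par" using tt Par_NC unfolding NC_def by auto
    have "w' t = w t" using W2 tt tP by auto
    then have l: "lee Oo (w t) (g'' t)" using G3 tt by auto
    obtain c where c: "c \<in> Cs" "w t = cval C c" using tt(4) unfolding Ccon_def by auto
    show ?thesis using lee_const[OF l O(1) c] by auto
  qed
  show "\<forall>at\<in>set A1. atom_holds Cb g at"
  proof
    fix at assume at: "at \<in> set A1"
    have "ren rho at \<in> set A2" using set_A2 at by auto
    then have h: "atom_holds Cb (g'' \<circ> rho) at" using G1 by (auto simp: ren_holds[symmetric])
    have "atom_holds Cb g at = atom_holds Cb (g'' \<circ> rho) at"
    proof (rule holds_cong)
      fix t assume t: "t \<in> atom_vars at"
      then have tq: "t \<in> qv A v0" "t \<noteq> s" using A1_vars at by auto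
      have "rho t \<in> atom_vars (ren rho at)" using t by (auto simp: ren_vars)
      then have rq: "rho t \<in> qv A2 a" using qv_atom[OF \<open>ren rho at \<in> set A2\<close>] by auto
      show "g t = (g'' \<circ> rho) t"
      proof (cases "w t \<in> CC")
        case True
        then have "rho t = t" using rho_nPar Par_NC unfolding NC_def by auto
        then show ?thesis using constv[of t] rq tq True g by auto
      next
        case False then show ?thesis using g tq by auto
      qed
    qed
    then show "atom_holds Cb g at" using h by auto
  qed
  show "\<forall>t\<in>qv A v0 - {s}. g t \<in> dom C \<and> lee Ob (w t) (g t)"
  proof
    fix t assume t: "t \<in> qv A v0 - {s}"
    show "g t \<in> dom C \<and> lee Ob (w t) (g t)"
    proof (cases "w t \<in> CC")
      case True then show ?thesis using g t dm lee_refl by auto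
    next
      case False
      have rq: "rho t \<in> qv A2 a"
      proof (cases "t = v0")
        case True then show ?thesis using anc t by auto
      next
        case False then show ?thesis using COV t \<open>w t \<notin> CC\<close> by auto
      qed
      have gt: "g t = g'' (rho t)" using g t False by auto
      have l1: "lee Ob (w t) (w' (rho t))" using lee_mono[OF eqv_lee[OF eqv_sym[OF E1]]] t O by auto
      have l2: "lee Ob (w' (rho t)) (g'' (rho t))" using lee_mono[OF G3[rule_format, OF rq] O(2)] .
      show ?thesis using lee_trans[OF l1 l2] gt G2 rq by auto
    qed
  qed
qed

end

lemma w2_W1: "t \<in> Par \<Longrightarrow> eqv (j - 1) (w2 (rho t)) (pp t)"
  using rho_Par[of t] pp(5) eqv_refl unfolding w2_def by auto
lemma w2_W2: "t \<in> qv A v0 \<Longrightarrow> t \<noteq> s \<Longrightarrow> t \<notin> Par \<Longrightarrow> w2 t = w t"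
  unfolding w2_def by auto

definition wA where "wA t = (if t = v0 then w v0 else w2 t)"
lemma wA_W1: "t \<in> Par \<Longrightarrow> eqv (j - 1) (wA (rho t)) (pp t)"
proof -
  assume t: "t \<in> Par"
  show ?thesis
  proof (cases "rho t = v0")
    case True
    then have "v0 \<in> Par" "pp v0 = pp t" using rho_Par[OF t] by auto
    then show ?thesis using True eqv_sym[OF pp(2)[of v0]] unfolding wA_def by auto
  next
    case False then show ?thesis using w2_W1[OF t] unfolding wA_def by auto
  qed
qed
lemma wA_W2: "t \<in> qv A v0 \<Longrightarrow> t \<noteq> s \<Longrightarrow> t \<notin> Par \<Longrightarrow> wA t = w t"
  unfolding wA_def w2_def by auto

end

context EL
begin

lemma A2_cfg: "set cfg \<subseteq> set A2" using set_A2 by auto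

lemma rhoPar_q2: "u \<in> Par \<Longrightarrow> rho u \<in> qv A2 a"
proof -
  assume u: "u \<in> Par"
  then have "UAt (Inr (col (pp u))) (rho u) \<in> set A2" using set_A2 set_cfg by auto
  then show ?thesis using qv_atom[of _ A2 "rho u" a] by auto
qed

lemma ell_q2: "ell \<in> qv A2 a" using rhoPar_q2[OF ell(1)] ell by auto

lemma caseB: assumes sv: "s = v0" and Ob: "1 \<le> Ob" "Ob \<le> j - 1" "Ob \<le> Oo" and S: "Sol Oo A2 ell w2 g''"
  shows "\<exists>g. Sol Ob A v0 w g"
proof -
  have G1: "\<forall>at\<in>set A2. atom_holds Cb g'' at" and G2: "\<forall>t\<in>qv A2 ell. g'' t \<in> dom C"
    and G0: "g'' ell = w2 ell" and G3: "\<forall>t\<in>qv A2 ell. lee Oo (w2 t) (g'' t)"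
    using S unfolding Sol_def by auto
  have Oo1: "1 \<le> Oo" using Ob by auto
  define g where "g t = (if t = s then w s else if w t \<in> CC then w t else g'' (rho t))" for t
  have anc: "v0 \<noteq> s \<Longrightarrow> rho v0 \<in> qv A2 ell" using sv by auto
  have R1: "\<forall>at\<in>set A1. atom_holds Cb g at"
    by (rule recon(1)[of w2, OF w2_W1 w2_W2 G1 G2 G3 Oo1 Ob(3) Ob(2) anc g_def])
  have R2: "\<forall>t\<in>qv A v0 - {s}. g t \<in> dom C \<and> lee Ob (w t) (g t)"
    by (rule recon(2)[of w2, OF w2_W1 w2_W2 G1 G2 G3 Oo1 Ob(3) Ob(2) anc g_def])
  have w2cfg: "\<forall>at\<in>set cfg. atom_holds Cb w2 at" by (rule cfg_sigma) (use rho_Par in \<open>auto simp: w2_def\<close>)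
  have pu: "g'' (rho u) = pp u" if u: "u \<in> Par" for u
  proof -
    have "g'' (rho u) = w2 (rho u)"
    proof (rule cfg_uniq)
      show "\<forall>at\<in>set cfg. atom_holds Cb g'' at" using G1 A2_cfg by auto
      show "\<forall>at\<in>set cfg. atom_holds Cb w2 at" by (rule w2cfg)
      show "g'' ell = w2 ell" by (rule G0)
      fix u' assume "u' \<in> Par"
      then show "g'' (rho u') \<in> dom C \<and> w2 (rho u') \<in> dom C"
        using G2 rhoPar_q2 rho_Par pp(5) unfolding w2_def by auto
    qed (rule u)
    then show ?thesis using rho_Par[OF u] unfolding w2_def by auto
  qed
  have atoms: "\<forall>at\<in>set A. atom_holds Cb g at"
  proof
    fix at assume at: "at \<in> set A"
    show "atom_holds Cb g at"
    proof (cases "s \<in> atom_vars at")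
      case False then show ?thesis using R1 A1_mem at by auto
    next
      case True
      show ?thesis
      proof (rule Sa_holds[OF lo ov dm _ sk at True])
        show "2 \<le> j" using jm by auto
        show "g s = w s" unfolding g_def by auto
        fix x assume "x \<in> qv A v0" "w x \<in> CC" then show "g x = w x" unfolding g_def by auto
      next
        fix u R assume ge: "gedge A v0 w u s" and b: "BAt R u s \<in> set A"
        have u: "u \<in> Par" using ge unfolding Par_def by auto
        have "g u = pp u" using pu[OF u] u s_nPar Par_CN[OF u] unfolding g_def Cnon_def by auto
        then show "brel Cb R (g u) (w s)" using pp(3)[OF u b] brelCb overA_B[OF ov b] by auto
      qed
    qed
  qed
  have "Sol Ob A v0 w g" unfolding Sol_def
  proof (intro conjI ballI)
    fix t assume t: "t \<in> qv A v0"
    show "g t \<in> dom C" using R2 t dm sq unfolding g_def by (cases "t = s") auto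
    show "lee Ob (w t) (g t)" using R2 t dm lee_refl unfolding g_def by (cases "t = s") auto
  next
    show "g v0 = w v0" using sv unfolding g_def by auto
  qed (use atoms in auto)
  then show ?thesis by auto
qed

lemma caseA: assumes sv: "s \<noteq> v0" and Ob: "1 \<le> Ob" and Oj: "Ob + m + TT Ob \<le> j - 1"
    and S: "Sol (Ob + m + TT Ob) A2 v0 wA g''"
  shows "\<exists>g. Sol Ob A v0 w g"
proof -
  define Oo where "Oo = Ob + m + TT Ob"
  have G1: "\<forall>at\<in>set A2. atom_holds Cb g'' at" and G2: "\<forall>t\<in>qv A2 v0. g'' t \<in> dom C"
    and G0: "g'' v0 = wA v0" and G3: "\<forall>t\<in>qv A2 v0. lee Oo (wA t) (g'' t)"
    using S unfolding Sol_def Oo_def by auto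
  have Oo1: "1 \<le> Oo" "Ob \<le> Oo" "Ob \<le> j - 1" using Ob Oj unfolding Oo_def by auto
  have wsd: "w s \<in> dom C" using dm sq by auto
  obtain Th where Th: "overA UB B Cs Th" "card (qv Th 0) \<le> TT Ob" "sat Cb Th 0 (w s)"
    "\<forall>y\<in>dom C. sat Cb Th 0 y \<longrightarrow> lee Ob (w s) y" using Theta[OF wsd Ob] by blast
  obtain \<theta> where th: "\<theta> 0 = w s" "\<forall>t\<in>qv Th 0. \<theta> t \<in> dom Cb" "\<forall>at\<in>set Th. atom_holds Cb \<theta> at"
    using Th(3) unfolding sat_def by auto
  define M where "M = Suc (Max (qv A v0))"
  have ltM: "t < M" if "t \<in> qv A v0" for t
  proof -
    have "t \<le> Max (qv A v0)" by (rule Max_ge[OF qv_fin that])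
    then show ?thesis unfolding M_def by simp
  qed
  define tr where "tr t = (if t = 0 then s else t + M)" for t
  define CV where "CV = {x \<in> qv A v0. w x \<in> CC}"
  define cvl where "cvl = sorted_list_of_set CV"
  have finCV: "finite CV" unfolding CV_def using qv_fin[of A v0] by auto
  have cvl: "set cvl = CV" unfolding cvl_def using finCV by simp
  define cc where "cc x = (SOME c. c \<in> Cs \<and> w x = cval C c)" for x
  have cc: "cc x \<in> Cs \<and> w x = cval C (cc x)" if "x \<in> CV" for x
  proof -
    have "\<exists>c. c \<in> Cs \<and> w x = cval C c" using that unfolding CV_def Ccon_def by auto
    then show ?thesis unfolding cc_def by (rule someI_ex)
  qed
  define Psi where "Psi = cfg @ map (ren rho) Sa @ map (\<lambda>x. EqC x (cc x)) cvl @ map (ren tr) Th"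
  have setPsi: "set Psi = set cfg \<union> ren rho ` set Sa \<union> (\<lambda>x. EqC x (cc x)) ` CV \<union> ren tr ` set Th"
    unfolding Psi_def using cvl by auto
  have qvPsi: "qv Psi ell \<subseteq> qv A v0 \<union> tr ` qv Th 0"
  proof
    fix t assume "t \<in> qv Psi ell"
    then consider "t = ell" | at where "at \<in> set Psi" "t \<in> atom_vars at" unfolding qv_def by auto
    then show "t \<in> qv A v0 \<union> tr ` qv Th 0"
    proof cases
      case 1 then show ?thesis using ell Par_q by auto
    next
      case 2
      from 2(1) consider "at \<in> set cfg" | at0 where "at0 \<in> set Sa" "at = ren rho at0"
        | x where "x \<in> CV" "at = EqC x (cc x)" | at0 where "at0 \<in> set Th" "at = ren tr at0"
        unfolding setPsi by blast
      then show ?thesis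
      proof cases
        case 1 then show ?thesis using cfg_vars 2(2) rho_Par Par_q by fastforce
      next
        case 2
        then obtain t0 where "t0 \<in> atom_vars at0" "t = rho t0" using \<open>t \<in> atom_vars at\<close> by (auto simp: ren_vars)
        then show ?thesis using rho_q qv_atom[of at0 A t0 v0] Sa_A 2 by auto
      next
        case 3 then show ?thesis using \<open>t \<in> atom_vars at\<close> unfolding CV_def by auto
      next
        case 4
        then obtain t0 where "t0 \<in> atom_vars at0" "t = tr t0" using \<open>t \<in> atom_vars at\<close> by (auto simp: ren_vars)
        then show ?thesis using qv_atom[of at0 Th t0 0] 4 by auto
      qed
    qed
  qed
  have "card (qv Psi ell) \<le> card (qv A v0 \<union> tr ` qv Th 0)"
    by (rule card_mono[OF _ qvPsi]) (use qv_fin in auto)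
  also have "\<dots> \<le> card (qv A v0) + card (tr ` qv Th 0)" by (rule card_Un_le)
  also have "\<dots> \<le> m + TT Ob" using cardm card_image_le[OF qv_fin, of tr Th 0] Th(2) by auto
  finally have cPsi: "card (qv Psi ell) \<le> Oo" unfolding Oo_def by auto
  have ovPsi: "overA UB B Cs Psi" unfolding overA_def
  proof
    fix at assume "at \<in> set Psi"
    then consider "at \<in> set cfg" | at0 where "at0 \<in> set Sa" "at = ren rho at0"
        | x where "x \<in> CV" "at = EqC x (cc x)" | at0 where "at0 \<in> set Th" "at = ren tr at0"
      unfolding setPsi by blast
    then show "atom_over UB B Cs at"
    proof cases
      case 1 then show ?thesis using ovA2 A2_cfg unfolding overA_def by auto
    next
      case 2 then show ?thesis using ov Sa_A unfolding overA_def by (auto simp: ren_over)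
    next
      case 3 then show ?thesis using cc by auto
    next
      case 4 then show ?thesis using Th(1) unfolding overA_def by (auto simp: ren_over)
    qed
  qed
  define \<sigma> where "\<sigma> t = (if M \<le> t then \<theta> (t - M) else if t = s then w s else if t \<in> Par then pp t else w t)" for t
  have sig_q: "\<sigma> t = (if t = s then w s else if t \<in> Par then pp t else w t)" if "t \<in> qv A v0" for t
    using ltM[OF that] unfolding \<sigma>_def by auto
  have sig_tr: "\<sigma> (tr t) = \<theta> t" for t
    using th(1) ltM[OF sq] unfolding \<sigma>_def tr_def by auto
  have sig_Par: "u \<in> Par \<Longrightarrow> \<sigma> (rho u) = pp u" for u
    using sig_q[of "rho u"] rho_Par[of u] Par_q s_nPar by auto
  have satP: "sat Cb Psi ell plow" unfolding sat_def
  proof (intro exI[of _ \<sigma>] conjI ballI)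
    show "\<sigma> ell = plow" using sig_Par[OF ell(1)] ell by auto
  next
    fix t assume "t \<in> qv Psi ell"
    then have "t \<in> qv A v0 \<or> t \<in> tr ` qv Th 0" using qvPsi by auto
    then show "\<sigma> t \<in> dom Cb"
    proof
      assume tq: "t \<in> qv A v0"
      show ?thesis using sig_q[OF tq] dm tq pp(5) by auto
    next
      assume "t \<in> tr ` qv Th 0"
      then obtain t0 where "t0 \<in> qv Th 0" "t = tr t0" by auto
      then show ?thesis using sig_tr th(2) by auto
    qed
  next
    fix at assume "at \<in> set Psi"
    then consider "at \<in> set cfg" | at0 where "at0 \<in> set Sa" "at = ren rho at0"
        | x where "x \<in> CV" "at = EqC x (cc x)" | at0 where "at0 \<in> set Th" "at = ren tr at0"
      unfolding setPsi by blast
    then show "atom_holds Cb \<sigma> at"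
    proof cases
      case 1 then show ?thesis using cfg_sigma[of \<sigma>] sig_Par by auto
    next
      case 2
      have at0A: "at0 \<in> set A" "s \<in> atom_vars at0" using 2 Sa_A unfolding Sa_def by auto
      have "atom_holds Cb (\<sigma> \<circ> rho) at0"
      proof (rule Sa_holds[OF lo ov dm _ sk at0A])
        show "2 \<le> j" using jm by auto
        show "(\<sigma> \<circ> rho) s = w s" using rho_s sig_q[OF sq] by auto
      next
        fix x assume x: "x \<in> qv A v0" "w x \<in> CC"
        then have "x \<notin> Par" "x \<noteq> s" using Par_NC wsCN unfolding NC_def Cnon_def by auto
        then show "(\<sigma> \<circ> rho) x = w x" using rho_nPar sig_q[OF x(1)] by auto
      next
        fix u R assume ge: "gedge A v0 w u s" and b: "BAt R u s \<in> set A"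
        have u: "u \<in> Par" using ge unfolding Par_def by auto
        show "brel Cb R ((\<sigma> \<circ> rho) u) (w s)" using sig_Par[OF u] pp(3)[OF u b] brelCb overA_B[OF ov b] by auto
      qed
      then show ?thesis using 2 by (auto simp: ren_holds)
    next
      case 3
      then have "x \<in> qv A v0" "x \<notin> Par" "x \<noteq> s" using Par_NC wsCN unfolding CV_def NC_def Cnon_def by auto
      then have "\<sigma> x = w x" using sig_q by auto
      then show ?thesis using 3 cc[OF 3(1)] cvalCb by auto
    next
      case 4
      have "atom_holds Cb (\<sigma> \<circ> tr) at0 = atom_holds Cb \<theta> at0"
        by (rule holds_cong) (simp add: sig_tr)
      then show ?thesis using 4 th(3) by (auto simp: ren_holds)
    qed
  qed
  have e1: "eqv (j - 1) (wA ell) plow" using wA_W1[OF ell(1)] ell by auto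
  have "sat Cb Psi ell (wA ell)"
    using TR[OF eqv_lee[OF eqv_sym[OF e1]] ovPsi _ satP] cPsi Oj unfolding Oo_def by auto
  moreover have "lee Oo (wA ell) (g'' ell)" using G3 ell_q2 by auto
  ultimately have "sat Cb Psi ell (g'' ell)" using TR[OF _ ovPsi cPsi] by auto
  then obtain \<nu> where nu: "\<nu> ell = g'' ell" "\<forall>t\<in>qv Psi ell. \<nu> t \<in> dom Cb" "\<forall>at\<in>set Psi. atom_holds Cb \<nu> at"
    unfolding sat_def by auto
  have cfgP: "set cfg \<subseteq> set Psi" unfolding setPsi by auto
  have rPar_Psi: "rho u \<in> qv Psi ell" if "u \<in> Par" for u
  proof -
    have "UAt (Inr (col (pp u))) (rho u) \<in> set Psi" using that set_cfg cfgP by auto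
    then show ?thesis using qv_atom[of _ Psi "rho u" ell] by auto
  qed
  have nup: "\<nu> (rho u) = g'' (rho u)" if u: "u \<in> Par" for u
  proof (rule cfg_uniq)
    show "\<forall>at\<in>set cfg. atom_holds Cb \<nu> at" using nu cfgP by auto
    show "\<forall>at\<in>set cfg. atom_holds Cb g'' at" using G1 A2_cfg by auto
    show "\<nu> ell = g'' ell" by (rule nu(1))
    fix u' assume "u' \<in> Par"
    then show "\<nu> (rho u') \<in> dom C \<and> g'' (rho u') \<in> dom C" using nu(2) rPar_Psi G2 rhoPar_q2 by auto
  qed (rule u)
  obtain u0 R0 where u0: "gedge A v0 w u0 s" "BAt R0 u0 s \<in> set A" using parne unfolding gedge_def by auto
  have "BAt R0 u0 s \<in> set Sa" using Sa_mem[OF u0(2)] by simp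
  then have "ren rho (BAt R0 u0 s) \<in> set Psi" unfolding setPsi by blast
  then have sPsi: "s \<in> qv Psi ell" using qv_atom[of _ Psi s ell] rho_s by auto
  have nucv: "\<nu> x = w x" if "x \<in> CV" for x
  proof -
    have "EqC x (cc x) \<in> set Psi" using that unfolding setPsi by auto
    then show ?thesis using nu(3) cc[OF that] cvalCb by fastforce
  qed
  define g where "g t = (if t = s then \<nu> s else if w t \<in> CC then w t else g'' (rho t))" for t
  have anc: "v0 \<noteq> s \<Longrightarrow> rho v0 \<in> qv A2 v0" using rho_v0 unfolding qv_def by auto
  have R1: "\<forall>at\<in>set A1. atom_holds Cb g at"
    by (rule recon(1)[of wA, OF wA_W1 wA_W2 G1 G2 G3 Oo1(1) Oo1(2) Oo1(3) anc g_def])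
  have R2: "\<forall>t\<in>qv A v0 - {s}. g t \<in> dom C \<and> lee Ob (w t) (g t)"
    by (rule recon(2)[of wA, OF wA_W1 wA_W2 G1 G2 G3 Oo1(1) Oo1(2) Oo1(3) anc g_def])
  have atoms: "\<forall>at\<in>set A. atom_holds Cb g at"
  proof
    fix at assume at: "at \<in> set A"
    show "atom_holds Cb g at"
    proof (cases "s \<in> atom_vars at")
      case False then show ?thesis using R1 A1_mem at by auto
    next
      case True
      have "ren rho at \<in> set Psi" using Sa_mem[OF at True] unfolding setPsi by blast
      then have h: "atom_holds Cb (\<nu> \<circ> rho) at" using nu(3) by (auto simp: ren_holds[symmetric])
      have "atom_holds Cb g at = atom_holds Cb (\<nu> \<circ> rho) at"
      proof (rule holds_cong)
        fix t assume t: "t \<in> atom_vars at"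
        have tq: "t \<in> qv A v0" using qv_atom[OF at t] .
        from SaV[OF sk at True t] consider "t = s" | "gedge A v0 w t s" | "w t \<in> CC" by auto
        then show "g t = (\<nu> \<circ> rho) t"
        proof cases
          case 1 then show ?thesis using rho_s unfolding g_def by auto
        next
          case 2
          then have u: "t \<in> Par" using Par_def by auto
          then show ?thesis using nup[OF u] s_nPar Par_CN[OF u] unfolding g_def Cnon_def by auto
        next
          case 3
          then have "t \<noteq> s" "t \<notin> Par" "t \<in> CV" using wsCN Par_NC tq unfolding Cnon_def NC_def CV_def by auto
          then show ?thesis using nucv rho_nPar 3 unfolding g_def by auto
        qed
      qed
      then show ?thesis using h by auto
    qed
  qed
  have gs: "lee Ob (w s) (\<nu> s)"
  proof -
    have qsub: "qv (map (ren tr) Th) s \<subseteq> qv Psi ell" using sPsi unfolding qv_def setPsi by auto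
    have "sat Cb (map (ren tr) Th) s (\<nu> s)" unfolding sat_def
      using nu qsub setPsi by (intro exI[of _ \<nu>]) auto
    then have "sat Cb Th 0 (\<nu> s)" by (rule sat_ren) (simp add: tr_def)
    then show ?thesis using Th(4) nu(2) sPsi by auto
  qed
  have "Sol Ob A v0 w g" unfolding Sol_def
  proof (intro conjI ballI)
    fix t assume t: "t \<in> qv A v0"
    show "g t \<in> dom C" using R2 t nu(2) sPsi unfolding g_def by (cases "t = s") auto
    show "lee Ob (w t) (g t)" using R2 t gs unfolding g_def by (cases "t = s") auto
  next
    have "rho v0 = v0" by (rule rho_v0)
    then show "g v0 = w v0" using sv G0 unfolding g_def wA_def by auto
  qed (use atoms in auto)
  then show ?thesis by auto
qed

end

lemma map_atom_vars: "atom_vars (map_atom f g h a) = atom_vars a" by (cases a) auto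

context LL
begin

lemma loose_mono: "loose j A w \<Longrightarrow> j' \<le> j \<Longrightarrow> loose j' A w"
  unfolding loose_def by (fastforce split: atom.splits intro: eqv_mono)

lemma caseC:
  assumes inst: "Inst A v0 w j" and jm: "m + 3 \<le> j" and sk: "sink A v0 w s" and sv: "s \<noteq> v0"
    and np: "\<not> (\<exists>u. gedge A v0 w u s)" and S: "Sol Oo (filter (\<lambda>at. s \<notin> atom_vars at) A) v0 w g''"
    and Ob: "1 \<le> Ob" "Ob \<le> Oo"
  shows "\<exists>g. Sol Ob A v0 w g"
proof -
  define A1 where "A1 = filter (\<lambda>at. s \<notin> atom_vars at) A"
  have lo: "loose j A w" and ov: "overA UB B Cs A" and dm: "\<forall>t\<in>qv A v0. w t \<in> dom C"
    using inst unfolding Inst_def by auto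
  have G1: "\<forall>at\<in>set A1. atom_holds Cb g'' at" and G2: "\<forall>t\<in>qv A1 v0. g'' t \<in> dom C"
    and G0: "g'' v0 = w v0" and G3: "\<forall>t\<in>qv A1 v0. lee Oo (w t) (g'' t)"
    using S unfolding Sol_def A1_def by auto
  have wsCC: "w s \<notin> CC" using sk unfolding sink_def NC_def by auto
  have inA1: "t \<in> qv A1 v0" if t: "t \<in> qv A v0" "t \<noteq> s" "w t \<notin> CC" for t
  proof (cases "t = v0")
    case True then show ?thesis unfolding qv_def by auto
  next
    case False
    then obtain at where at: "at \<in> set A" "t \<in> atom_vars at" using t unfolding qv_def by auto
    have "s \<notin> atom_vars at"
    proof
      assume "s \<in> atom_vars at"
      then show False using SaV[OF sk at(1) _ at(2)] np t by auto
    qed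
    then have "at \<in> set A1" using at unfolding A1_def by auto
    then show ?thesis using qv_atom at(2) by auto
  qed
  have constv: "g'' t = w t" if tt: "t \<in> qv A1 v0" "w t \<in> CC" for t
  proof -
    obtain c where c: "c \<in> Cs" "w t = cval C c" using tt(2) unfolding Ccon_def by auto
    show ?thesis using lee_const[OF G3[rule_format, OF tt(1)] _ c] Ob by auto
  qed
  define g where "g t = (if t = s then w s else if w t \<in> CC then w t else g'' t)" for t
  have atoms: "\<forall>at\<in>set A. atom_holds Cb g at"
  proof
    fix at assume at: "at \<in> set A"
    show "atom_holds Cb g at"
    proof (cases "s \<in> atom_vars at")
      case True
      show ?thesis
      proof (rule Sa_holds[OF lo ov dm _ sk at True])
        show "2 \<le> j" using jm by auto
        show "g s = w s" unfolding g_def by auto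
        fix x assume "x \<in> qv A v0" "w x \<in> CC" then show "g x = w x" unfolding g_def by auto
      next
        fix u R assume "gedge A v0 w u s" then show "brel Cb R (g u) (w s)" using np by auto
      qed
    next
      case False
      then have a1: "at \<in> set A1" using at unfolding A1_def by auto
      have "atom_holds Cb g at = atom_holds Cb g'' at"
      proof (rule holds_cong)
        fix t assume t: "t \<in> atom_vars at"
        then have "t \<noteq> s" "t \<in> qv A1 v0" using False qv_atom[OF a1] by auto
        then show "g t = g'' t" using constv unfolding g_def by auto
      qed
      then show ?thesis using G1 a1 by auto
    qed
  qed
  have "Sol Ob A v0 w g" unfolding Sol_def
  proof (intro conjI ballI)
    fix t assume t: "t \<in> qv A v0"
    show "g t \<in> dom C" using dm t G2 inA1[OF t] unfolding g_def by auto
    show "lee Ob (w t) (g t)"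
    proof (cases "t = s \<or> w t \<in> CC")
      case True then show ?thesis using dm t lee_refl unfolding g_def by auto
    next
      case False
      then have "t \<in> qv A1 v0" using inA1 t by auto
      then show ?thesis using lee_mono[OF G3[rule_format] Ob(2)] False unfolding g_def by auto
    qed
  next
    show "g v0 = w v0" using sv G0 unfolding g_def by auto
  qed (use atoms in auto)
  then show ?thesis by auto
qed

lemma base:
  assumes inst: "Inst A v0 w j" and j: "2 \<le> j" and ne: "\<not> (\<exists>x y. gedge A v0 w x y)"
  shows "Sol Ob A v0 w w"
proof -
  have lo: "loose j A w" and ov: "overA UB B Cs A" and dm: "\<forall>t\<in>qv A v0. w t \<in> dom C"
    using inst unfolding Inst_def by auto
  have "\<forall>at\<in>set A. atom_holds Cb w at"
  proof
    fix at assume at: "at \<in> set A"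
    show "atom_holds Cb w at"
    proof (cases at)
      case (UAt u x) then show ?thesis using loose_U[OF lo] at by auto
    next
      case (EqC x c) then show ?thesis using loose_E[OF lo] at by auto
    next
      case (BAt R x y)
      have q: "x \<in> qv A v0" "y \<in> qv A v0" using qv_atom[OF at] BAt by auto
      have "w x \<in> CC \<or> w y \<in> CC" using ne BAt at q unfolding gedge_def NC_def by auto
      then show ?thesis using L_exact[OF lo j _ overA_B[OF ov]] at BAt dm q by auto
    qed
  qed
  then show ?thesis unfolding Sol_def using dm lee_refl by auto
qed

fun LLf :: "nat \<Rightarrow> nat \<Rightarrow> nat" where
  "LLf 0 Ob = Ob + m + 3"
| "LLf (Suc d) Ob = LLf d (Ob + m + TT Ob) + Ob + m + TT Ob + m + 3"

lemma LLf_ge: "Ob + m + 3 \<le> LLf d Ob" by (cases d) auto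

lemma MAIN: "\<forall>A v0 w j Ob. card (qv A v0) \<le> d \<longrightarrow> Inst A v0 w j \<longrightarrow> LLf d Ob \<le> j \<longrightarrow> 1 \<le> Ob \<longrightarrow> (\<exists>g. Sol Ob A v0 w g)"
proof (induction d)
  case 0
  have "card (qv (A :: ('u + nat \<times> nat, 'b, 'c) atom list) v0) \<noteq> 0" for A v0
  proof -
    have "qv A v0 \<noteq> {}" unfolding qv_def by auto
    then show ?thesis using qv_fin[of A v0] by auto
  qed
  then show ?case by (metis le_zero_eq)
next
  case (Suc d)
  show ?case
  proof (intro allI impI)
    fix A v0 w j Ob
    assume cd: "card (qv A v0) \<le> Suc d" and inst: "Inst A v0 w j" and jL: "LLf (Suc d) Ob \<le> j" and Ob: "1 \<le> Ob"
    define Oo where "Oo = Ob + m + TT Ob"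
    have jL2: "LLf d Oo \<le> j - 1" "Oo \<le> j - 1" "m + 3 \<le> j" "Ob \<le> Oo"
      using jL LLf_ge[of Oo d] unfolding Oo_def by auto
    have IH: "\<exists>g. Sol Oo A' v0' w' g" if "card (qv A' v0') \<le> d" "Inst A' v0' w' (j - 1)" for A' v0' w'
      using Suc.IH that jL2 Ob unfolding Oo_def by auto
    have lo: "loose j A w" and ov: "overA UB B Cs A" and dm: "\<forall>t\<in>qv A v0. w t \<in> dom C" and cm: "card (qv A v0) \<le> m"
      using inst unfolding Inst_def by auto
    show "\<exists>g. Sol Ob A v0 w g"
    proof (cases "\<exists>s. sink A v0 w s \<and> s \<noteq> v0")
      case True
      then obtain s where s: "sink A v0 w s" "s \<noteq> v0" by auto
      show ?thesis
      proof (cases "\<exists>u. gedge A v0 w u s")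
        case True
        interpret E: EL U B Cs C K Cb m A v0 w j s
          by (unfold_locales) (use inst jL2 s True in auto)
        have v0r: "v0 \<in> E.rho ` (qv A v0 - {s})" using E.rho_v0 s by (metis DiffI image_eqI insertI1 qv_def singletonD)
        have c2: "card (qv E.A2 v0) < card (qv A v0)" using E.card2[OF v0r] .
        have qs: "qv E.A2 v0 \<subseteq> E.rho ` (qv A v0 - {s})" using E.qvA2 v0r by auto
        have dd: "\<forall>t\<in>qv E.A2 v0. E.wA t \<in> dom C" using qs E.dom2[OF E.wA_W1 E.wA_W2] by blast
        have "Inst E.A2 v0 E.wA (j - 1)" unfolding Inst_def
          using c2 cm E.ovA2 dd E.loose2[OF E.wA_W1 E.wA_W2] by auto
        then obtain g'' where "Sol Oo E.A2 v0 E.wA g''" using IH c2 cd by fastforce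
        then show ?thesis using E.caseA s Ob jL2 unfolding Oo_def by auto
      next
        case False
        let ?A1 = "filter (\<lambda>at. s \<notin> atom_vars at) A"
        have sub: "qv ?A1 v0 \<subseteq> qv A v0 - {s}" using s(2) unfolding qv_def by auto
        have sq: "s \<in> qv A v0" using s unfolding sink_def NC_def by auto
        have "card (qv ?A1 v0) \<le> card (qv A v0 - {s})" by (rule card_mono[OF _ sub]) (use qv_fin in auto)
        also have "\<dots> < card (qv A v0)" using sq qv_fin by (meson card_Diff1_less)
        finally have c1: "card (qv ?A1 v0) < card (qv A v0)" .
        have "loose (j - 1) ?A1 w" using loose_mono[OF lo, of "j - 1"] unfolding loose_def by auto
        moreover have "overA UB B Cs ?A1" using ov unfolding overA_def by auto
        ultimately have "Inst ?A1 v0 w (j - 1)" unfolding Inst_def using c1 cm dm sub by auto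
        then obtain g'' where "Sol Oo ?A1 v0 w g''" using IH c1 cd by fastforce
        then show ?thesis using caseC[OF inst jL2(3) s(1) s(2) False] Ob jL2 by auto
      qed
    next
      case nos: False
      show ?thesis
      proof (cases "sink A v0 w v0 \<and> (\<exists>u. gedge A v0 w u v0)")
        case True
        interpret E: EL U B Cs C K Cb m A v0 w j v0
          by (unfold_locales) (use inst jL2 True in auto)
        have er: "E.ell \<in> E.rho ` (qv A v0 - {v0})" using E.ell E.Par_sub by (metis image_eqI subsetD)
        have c2: "card (qv E.A2 E.ell) < card (qv A v0)" using E.card2[OF er] .
        have qs: "qv E.A2 E.ell \<subseteq> E.rho ` (qv A v0 - {v0})" using E.qvA2 er by auto
        have dd: "\<forall>t\<in>qv E.A2 E.ell. E.w2 t \<in> dom C" using qs E.dom2[OF E.w2_W1 E.w2_W2] by blast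
        have "Inst E.A2 E.ell E.w2 (j - 1)" unfolding Inst_def
          using c2 cm E.ovA2 dd E.loose2[OF E.w2_W1 E.w2_W2] by auto
        then obtain g'' where "Sol Oo E.A2 E.ell E.w2 g''" using IH c2 cd by fastforce
        then show ?thesis using E.caseB Ob jL2 by auto
      next
        case nov: False
        have "\<not> (\<exists>x y. gedge A v0 w x y)"
        proof
          assume "\<exists>x y. gedge A v0 w x y"
          then obtain x y where xy: "gedge A v0 w x y" by auto
          define S where "S = {z \<in> NC A v0 w. \<not> sink A v0 w z}"
          have "x \<in> S" using xy unfolding S_def sink_def gedge_def by auto
          moreover have "\<forall>z\<in>S. \<exists>y\<in>S. gedge A v0 w z y"
          proof
            fix z assume z: "z \<in> S"
            then obtain y where y: "gedge A v0 w z y" unfolding S_def sink_def by auto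
            have "y \<in> NC A v0 w" using y unfolding gedge_def by auto
            moreover have "\<not> sink A v0 w y"
            proof
              assume "sink A v0 w y"
              then have "y = v0" using nos by auto
              then show False using nov y \<open>sink A v0 w y\<close> by auto
            qed
            ultimately show "\<exists>y\<in>S. gedge A v0 w z y" using y unfolding S_def by auto
          qed
          ultimately show False using CYC[OF lo ov dm cm _, of S] jL2 unfolding S_def by auto
        qed
        then have "Sol Ob A v0 w w" using base[OF inst] jL2 by auto
        then show ?thesis by auto
      qed
    qed
  qed
qed

end

context LL
begin

abbreviation qq where "qq n \<equiv> qn U B Cs K n Cb"

lemma qn_eqv: "y \<in> dom C \<Longrightarrow> x \<in> qq n y \<Longrightarrow> eqv n x y"
  unfolding qn_def eqv_def by auto
lemma qn_self: "y \<in> dom C \<Longrightarrow> y \<in> qq n y"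
  unfolding qn_def by auto

lemma final: "\<forall>\<Phi>. cq_over U B Cs \<Phi> \<and> fst \<Phi> < m \<longrightarrow>
           (\<exists>n. \<forall>e\<in>dom C.
              holds (quot U B Cs K n Cb) (lift_cq \<Phi>) (qq n e) \<longleftrightarrow> holds C \<Phi> e)"
proof (intro allI impI)
  fix \<Phi> :: "('u, 'b, 'c) cq"
  assume a: "cq_over U B Cs \<Phi> \<and> fst \<Phi> < m"
  define k where "k = fst \<Phi>"
  define n where "n = LLf m 1"
  have n1: "1 \<le> n" "2 \<le> n" using LLf_ge[of 1 m] unfolding n_def by auto
  have atP: "atom_over U B Cs at \<and> atom_vars at \<subseteq> {0..k}" if "at \<in> set (snd \<Phi>)" for at
    using a that unfolding cq_over_def k_def by auto
  define D :: "('u + nat \<times> nat, 'b, 'c) atom list" where "D = map (map_atom Inl id id) (snd \<Phi>)"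
  have liftD: "lift_cq \<Phi> = (k, D)" unfolding lift_cq_def D_def k_def by auto
  show "\<exists>n. \<forall>e\<in>dom C. holds (quot U B Cs K n Cb) (lift_cq \<Phi>) (qq n e) \<longleftrightarrow> holds C \<Phi> e"
  proof (intro exI[of _ n] ballI iffI)
    fix e assume e: "e \<in> dom C"
    assume "holds C \<Phi> e"
    then obtain v where v: "v 0 = e" "\<forall>i\<in>{1..k}. v i \<in> dom C" "\<forall>at\<in>set (snd \<Phi>). atom_holds C v at"
      unfolding holds_def k_def by auto
    have vd: "v i \<in> dom C" if "i \<le> k" for i using v e that by (cases "i = 0") auto
    show "holds (quot U B Cs K n Cb) (lift_cq \<Phi>) (qq n e)" unfolding liftD holds_def
    proof (intro exI[of _ "\<lambda>i. qq n (v i)"] conjI ballI)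
      show "qq n (v 0) = qq n e" using v by auto
    next
      fix i assume "i \<in> {1..fst (k, D)}"
      then show "qq n (v i) \<in> dom (quot U B Cs K n Cb)" using vd unfolding quot_def by auto
    next
      fix at assume "at \<in> set (snd (k, D))"
      then obtain at0 where at0: "at0 \<in> set (snd \<Phi>)" "at = map_atom Inl id id at0" unfolding D_def by auto
      have ok: "atom_over U B Cs at0" "atom_vars at0 \<subseteq> {0..k}" using atP[OF at0(1)] by auto
      have h: "atom_holds C v at0" using v at0 by auto
      show "atom_holds (quot U B Cs K n Cb) (\<lambda>i. qq n (v i)) at"
      proof (cases at0)
        case (UAt u x)
        then have "urel Cb (Inl u) (v x)" using h ok urelCb by auto
        moreover have "v x \<in> qq n (v x)" using qn_self vd ok UAt by auto
        ultimately show ?thesis using at0 UAt unfolding quot_def by auto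
      next
        case (BAt R x y)
        then have "brel Cb R (v x) (v y)" using h ok brelCb by auto
        moreover have "v x \<in> qq n (v x)" "v y \<in> qq n (v y)" using qn_self vd ok BAt by auto
        ultimately show ?thesis using at0 BAt unfolding quot_def by auto
      next
        case (EqC x c)
        then have "v x = cval Cb c" using h ok cvalCb by auto
        then show ?thesis using at0 EqC unfolding quot_def by auto
      qed
    qed
  next
    fix e assume e: "e \<in> dom C"
    assume "holds (quot U B Cs K n Cb) (lift_cq \<Phi>) (qq n e)"
    then obtain V where V: "V 0 = qq n e" "\<forall>i\<in>{1..k}. V i \<in> dom (quot U B Cs K n Cb)"
      "\<forall>at\<in>set D. atom_holds (quot U B Cs K n Cb) V at"
      unfolding holds_def liftD by auto
    define w where "w i = (if i = 0 then e else SOME x. x \<in> dom C \<and> V i = qq n x)" for i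
    have w: "w i \<in> dom C \<and> V i = qq n (w i)" if "i \<le> k" for i
    proof (cases "i = 0")
      case True then show ?thesis using e V unfolding w_def by auto
    next
      case False
      then have "V i \<in> qq n ` dom C" using V that unfolding quot_def by auto
      then have "\<exists>x. x \<in> dom C \<and> V i = qq n x" by auto
      then have "(SOME x. x \<in> dom C \<and> V i = qq n x) \<in> dom C \<and> V i = qq n (SOME x. x \<in> dom C \<and> V i = qq n x)"
        by (rule someI_ex)
      then show ?thesis unfolding w_def using False by simp
    qed
    have qvD: "qv D 0 \<subseteq> {0..k}" unfolding qv_def D_def using atP by (auto simp: map_atom_vars)
    have lo: "loose n D w" unfolding loose_def
    proof
      fix at assume "at \<in> set D"
      then obtain at0 where at0: "at0 \<in> set (snd \<Phi>)" "at = map_atom Inl id id at0" unfolding D_def by auto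
      have ok: "atom_over U B Cs at0" "atom_vars at0 \<subseteq> {0..k}" using atP[OF at0(1)] by auto
      have h: "atom_holds (quot U B Cs K n Cb) V at" using V \<open>at \<in> set D\<close> by auto
      show "case at of UAt u x \<Rightarrow> urel Cb u (w x) | EqC x c \<Rightarrow> w x = cval Cb c
        | BAt R x y \<Rightarrow> \<exists>a b. eqv n a (w x) \<and> eqv n b (w y) \<and> brel Cb R a b"
      proof (cases at0)
        case (UAt u x)
        have wx: "w x \<in> dom C" "V x = qq n (w x)" using w ok UAt by auto
        obtain y where y: "y \<in> qq n (w x)" "urel Cb (Inl u) y" using h at0 UAt wx unfolding quot_def by auto
        have "urel Cb (Inl u) (w x)" using lee_urel[OF eqv_lee[OF qn_eqv[OF wx(1) y(1)]] n1(1) _ y(2)] ok UAt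
          unfolding UB_def by auto
        then show ?thesis using at0 UAt by auto
      next
        case (BAt R x y)
        have wx: "w x \<in> dom C" "V x = qq n (w x)" "w y \<in> dom C" "V y = qq n (w y)" using w ok BAt by auto
        obtain a b where ab: "a \<in> qq n (w x)" "b \<in> qq n (w y)" "brel Cb R a b" using h at0 BAt wx unfolding quot_def by auto
        show ?thesis using at0 BAt qn_eqv[OF wx(1) ab(1)] qn_eqv[OF wx(3) ab(2)] ab(3) by auto
      next
        case (EqC x c)
        have wx: "w x \<in> dom C" "V x = qq n (w x)" using w ok EqC by auto
        have cC: "c \<in> Cs" using ok EqC by auto
        have "qq n (w x) = qq n (cval Cb c)" using h at0 EqC wx unfolding quot_def by auto
        then have "w x \<in> qq n (cval C c)" using qn_self[OF wx(1)] cvalCb[OF cC] by auto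
        then have "eqv n (w x) (cval C c)" using qn_eqv cval_dom[OF cC] by auto
        then have "w x = cval C c" using eqv_CC n1 cC unfolding Ccon_def by auto
        then show ?thesis using at0 EqC cvalCb[OF cC] by auto
      qed
    qed
    have ovD: "overA UB B Cs D" unfolding overA_def
    proof
      fix at assume "at \<in> set D"
      then obtain at0 where at0: "at0 \<in> set (snd \<Phi>)" "at = map_atom Inl id id at0" unfolding D_def by auto
      have o: "atom_over U B Cs at0" using atP[OF at0(1)] by auto
      show "atom_over UB B Cs at" unfolding at0(2) UB_def using o by (cases at0) auto
    qed
    have cD: "card (qv D 0) \<le> m"
    proof -
      have "card (qv D 0) \<le> card {0..k}" by (rule card_mono[OF _ qvD]) auto
      then show ?thesis using a unfolding k_def by auto
    qed
    have "Inst D 0 w n" unfolding Inst_def using cD ovD lo qvD w by auto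
    then have "\<exists>g. Sol 1 D 0 w g" using MAIN[of m, rule_format, of D 0 w n 1] cD unfolding n_def by auto
    then obtain g where g: "Sol 1 D 0 w g" by blast
    have G1: "\<forall>at\<in>set D. atom_holds Cb g at" and G2: "\<forall>t\<in>qv D 0. g t \<in> dom C" and G0: "g 0 = e"
      using g unfolding Sol_def w_def by auto
    define v where "v i = (if i \<in> qv D 0 then g i else e)" for i
    show "holds C \<Phi> e" unfolding holds_def
    proof (intro exI[of _ v] conjI ballI)
      show "v 0 = e" using G0 unfolding v_def by auto
    next
      fix i assume "i \<in> {1..fst \<Phi>}"
      then show "v i \<in> dom C" using G2 e unfolding v_def by auto
    next
      fix at0 assume at0: "at0 \<in> set (snd \<Phi>)"
      have ok: "atom_over U B Cs at0" using atP[OF at0] by auto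
      have mD: "map_atom Inl id id at0 \<in> set D" using at0 unfolding D_def by auto
      have h: "atom_holds Cb g (map_atom Inl id id at0)" using G1 mD by auto
      have vv: "v t = g t" if "t \<in> atom_vars at0" for t
        using qv_atom[OF mD, of t 0] that unfolding v_def by (auto simp: map_atom_vars)
      show "atom_holds C v at0"
      proof (cases at0)
        case (UAt u x) then show ?thesis using h vv ok urelCb by auto
      next
        case (BAt R x y) then show ?thesis using h vv ok brelCb by auto
      next
        case (EqC x c) then show ?thesis using h vv ok cvalCb by auto
      qed
    qed
  qed
qed

end

theorem lemma9:
  fixes U :: "'u set" and B :: "'b set" and Cs :: "'c set"
    and C :: "('e,'u,'b,'c) struc"
    and K :: "(nat \<times> nat) set" and Cb :: "('e,'u + nat \<times> nat,'b,'c) struc"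
    and m :: nat
  assumes "vtdag U B Cs C"
    and "natural_coloring U B Cs C K Cb m"
  shows "\<forall>\<Phi>. cq_over U B Cs \<Phi> \<and> fst \<Phi> < m \<longrightarrow>
           (\<exists>n. \<forall>e\<in>dom C.
              holds (quot U B Cs K n Cb) (lift_cq \<Phi>) (qn U B Cs K n Cb e) \<longleftrightarrow> holds C \<Phi> e)"
proof -
  interpret LL U B Cs C K Cb m using assms by unfold_locales
  show ?thesis by (rule final)
qed

end
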